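(* For each $N\ge2$ let $(\nu_t^{(1:N)})_{t\ge1}$ be random vectors of non-negative integers with $\sum_i\nu_t^{(i)} = N$, such that for all sufficiently large $N$ and all $u\ge0$, $\tau_N(u)<\infty$ almost surely. Suppose there is a deterministic sequence $b_N\to0$ such that for all sufficiently large $N$, almost surely and uniformly in $t\ge1$, $$\frac{1}{(N)_3}\sum_{i=1}^N \mathbb{E}\big[(\nu_t^{(i)})_3 \,\big|\, \mathcal{F}_{t-1}\big] \leq b_N \frac{1}{(N)_2}\sum_{i=1}^N \mathbb{E}\big[(\nu_t^{(i)})_2 \,\big|\, \mathcal{F}_{t-1}\big].$$ Fix $k\in\mathbb{N}$, set $i_0:=0$, $i_k:=k$, and let $(E_N)$ be a sequence of events with $\lim_{N\to\infty}\mathbb{P}[E_N]=1$. Then for any times $0=t_0\le t_1\le\cdots\le t_k\le t$, $$\lim_{N\to\infty}\mathbb{E}\Bigg[\mathbb{1}_{E_N}\sum_{\substack{r_1<\cdots<r_k:\\ r_i\le\tau_N(t_i)\,\forall i}}\prod_{i=1}^k c_N(r_i)\Bigg] = \sum_{\substack{i_1\le\cdots\le i_{k-1}\in\{0,\dots,k\}:\\ i_j\ge j\ \forall j}}\prod_{j=1}^k\frac{(t_j-t_{j-1})^{i_j-i_{j-1}}}{(i_j-i_{j-1})!}.$$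
   Context: $(x)_k$ is the falling factorial; $\mathcal{F}_t := \sigma(\nu_s^{(1:N)}: s\le t)$ ($\mathcal{F}_0$ trivial). $c_N(r) := \frac{1}{(N)_2}\sum_i(\nu_r^{(i)})_2$; $\tau_N(u) := \inf\{s\in\{0,1,\dots\}: \sum_{r=1}^s c_N(r)\ge u\}$. The indices $r_i$ range over positive integers. *)

theory Defs
  imports "HOL-Probability.Probability"
begin

definition ffact_r :: "real \<Rightarrow> nat \<Rightarrow> real" where
  "ffact_r x k = (\<Prod>j<k. x - real j)"

text \<open>The offspring numbers: nu N t i \<omega> is nu_t^(i) in the N-th model (t \<ge> 1, 1 \<le> i \<le> N).
  Natural filtration F_t = sigma(nu_s^(1:N) : s \<le> t); F_0 is trivial.\<close>
definition filt :: "(nat \<Rightarrow> 'a measure) \<Rightarrow> (nat \<Rightarrow> nat \<Rightarrow> nat \<Rightarrow> 'a \<Rightarrow> nat) \<Rightarrow> nat \<Rightarrow> nat \<Rightarrow> 'a measure" where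
  "filt M nu N t = sigma (space (M N))
     {nu N s i -` A \<inter> space (M N) | s i A. 1 \<le> s \<and> s \<le> t \<and> 1 \<le> i \<and> i \<le> N}"

definition cN :: "(nat \<Rightarrow> nat \<Rightarrow> nat \<Rightarrow> 'a \<Rightarrow> nat) \<Rightarrow> nat \<Rightarrow> nat \<Rightarrow> 'a \<Rightarrow> real" where
  "cN nu N r \<omega> = (\<Sum>i=1..N. ffact_r (real (nu N r i \<omega>)) 2) / ffact_r (real N) 2"

definition tauN :: "(nat \<Rightarrow> nat \<Rightarrow> nat \<Rightarrow> 'a \<Rightarrow> nat) \<Rightarrow> nat \<Rightarrow> real \<Rightarrow> 'a \<Rightarrow> enat" where
  "tauN nu N u \<omega> =
     (if \<exists>s. (\<Sum>r=1..s. cN nu N r \<omega>) \<ge> u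
      then enat (LEAST s. (\<Sum>r=1..s. cN nu N r \<omega>) \<ge> u) else \<infinity>)"

definition rtuples :: "(nat \<Rightarrow> nat \<Rightarrow> nat \<Rightarrow> 'a \<Rightarrow> nat) \<Rightarrow> nat \<Rightarrow> nat \<Rightarrow> (nat \<Rightarrow> real) \<Rightarrow> 'a \<Rightarrow> (nat \<Rightarrow> nat) set" where
  "rtuples nu N k t \<omega> = {r. (\<forall>i. i \<notin> {1..k} \<longrightarrow> r i = 0)
      \<and> (\<forall>i\<in>{1..k}. 1 \<le> r i \<and> enat (r i) \<le> tauN nu N (t i) \<omega>)
      \<and> (\<forall>i\<in>{1..<k}. r i < r (i+1))}"

definition ext_idx :: "nat \<Rightarrow> (nat \<Rightarrow> nat) \<Rightarrow> nat \<Rightarrow> nat" where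
  "ext_idx k f j = (if j = 0 then 0 else if j = k then k else f j)"

definition ituples :: "nat \<Rightarrow> (nat \<Rightarrow> nat) set" where
  "ituples k = {f. (\<forall>j. j \<notin> {1..<k} \<longrightarrow> f j = 0)
      \<and> (\<forall>j\<in>{1..<k}. j \<le> f j \<and> f j \<le> k)
      \<and> (\<forall>j<k. ext_idx k f j \<le> ext_idx k f (Suc j))}"

end

theory Submission
  imports Defs "HOL-Library.FuncSet"
begin



definition esym :: "(nat \<Rightarrow> real) \<Rightarrow> nat set \<Rightarrow> nat \<Rightarrow> real" where
  "esym c B m = (\<Sum>A | A \<subseteq> B \<and> card A = m. \<Prod>a\<in>A. c a)"

lemma finite_subsets_card: "finite B \<Longrightarrow> finite {A. A \<subseteq> B \<and> card A = m}"
  by (rule finite_subset[of _ "Pow B"]) auto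

lemma esym_0: "finite B \<Longrightarrow> esym c B 0 = 1"
proof -
  assume "finite B"
  then have "{A. A \<subseteq> B \<and> card A = 0} = {{}}" by (auto dest: rev_finite_subset)
  then show ?thesis by (simp add: esym_def)
qed

lemma esym_nonneg: "(\<And>a. a \<in> B \<Longrightarrow> c a \<ge> 0) \<Longrightarrow> esym c B m \<ge> 0"
  unfolding esym_def by (intro sum_nonneg prod_nonneg) auto

lemma esym_rec:
  assumes fin: "finite B"
  shows "(\<Sum>a\<in>B. c a) * esym c B m = real (Suc m) * esym c B (Suc m)
          + (\<Sum>A | A \<subseteq> B \<and> card A = m. (\<Prod>a\<in>A. c a) * (\<Sum>a\<in>A. c a))"
proof -
  let ?S = "\<lambda>m. {A. A \<subseteq> B \<and> card A = m}"
  have fS: "finite (?S m)" for m using finite_subsets_card[OF fin] .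
  have "(\<Sum>a\<in>B. c a) * esym c B m = (\<Sum>A\<in>?S m. \<Sum>a\<in>B. c a * (\<Prod>a\<in>A. c a))"
    unfolding esym_def by (simp add: sum_distrib_left sum_distrib_right mult.commute)
  also have "\<dots> = (\<Sum>A\<in>?S m. (\<Prod>a\<in>A. c a) * (\<Sum>a\<in>A. c a) + (\<Sum>a\<in>B - A. c a * (\<Prod>a\<in>A. c a)))"
  proof (rule sum.cong[OF refl])
    fix A assume A: "A \<in> ?S m"
    then have "A \<subseteq> B" by auto
    then have "(\<Sum>a\<in>B. c a * (\<Prod>a\<in>A. c a)) = (\<Sum>a\<in>B - A. c a * (\<Prod>a\<in>A. c a)) + (\<Sum>a\<in>A. c a * (\<Prod>a\<in>A. c a))"
      using sum.subset_diff[OF \<open>A \<subseteq> B\<close> fin] by simp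
    then show "(\<Sum>a\<in>B. c a * (\<Prod>a\<in>A. c a)) = (\<Prod>a\<in>A. c a) * (\<Sum>a\<in>A. c a) + (\<Sum>a\<in>B - A. c a * (\<Prod>a\<in>A. c a))"
      by (simp add: sum_distrib_left sum_distrib_right mult.commute)
  qed
  also have "\<dots> = (\<Sum>A\<in>?S m. (\<Prod>a\<in>A. c a) * (\<Sum>a\<in>A. c a)) + (\<Sum>A\<in>?S m. \<Sum>a\<in>B - A. c a * (\<Prod>a\<in>A. c a))"
    by (simp add: sum.distrib)
  also have "(\<Sum>A\<in>?S m. \<Sum>a\<in>B - A. c a * (\<Prod>a\<in>A. c a)) = (\<Sum>(A,a)\<in>Sigma (?S m) (\<lambda>A. B - A). (\<Prod>a\<in>insert a A. c a))"
  proof -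
    have "(\<Sum>A\<in>?S m. \<Sum>a\<in>B - A. c a * (\<Prod>a\<in>A. c a)) = (\<Sum>A\<in>?S m. \<Sum>a\<in>B - A. (\<Prod>a\<in>insert a A. c a))"
    proof (intro sum.cong refl)
      fix A a assume "A \<in> ?S m" "a \<in> B - A"
      then have "finite A" using fin by (auto intro: finite_subset)
      then show "c a * (\<Prod>a\<in>A. c a) = (\<Prod>a\<in>insert a A. c a)" using \<open>a \<in> B - A\<close> by simp
    qed
    also have "\<dots> = (\<Sum>(A,a)\<in>Sigma (?S m) (\<lambda>A. B - A). (\<Prod>a\<in>insert a A. c a))"
      by (rule sum.Sigma) (use fS fin in auto)
    finally show ?thesis .
  qed
  also have "\<dots> = (\<Sum>(A,a)\<in>Sigma (?S (Suc m)) (\<lambda>A. A). (\<Prod>a\<in>A. c a))"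
  proof (rule sum.reindex_bij_witness[where i = "\<lambda>p. (fst p - {snd p}, snd p)" and j = "\<lambda>p. (insert (snd p) (fst p), snd p)"])
    fix p assume p: "p \<in> Sigma (?S (Suc m)) (\<lambda>A. A)"
    then have fa: "finite (fst p)" using fin by (auto dest: rev_finite_subset)
    show "(fst p - {snd p}, snd p) \<in> Sigma (?S m) (\<lambda>A. B - A)"
      using p fa by (auto simp: card_Diff_singleton)
    show "(insert (snd (fst p - {snd p}, snd p)) (fst (fst p - {snd p}, snd p)), snd (fst p - {snd p}, snd p)) = p"
      using p by (cases p) auto
  next
    fix p assume p: "p \<in> Sigma (?S m) (\<lambda>A. B - A)"
    then have fa: "finite (fst p)" using fin by (auto dest: rev_finite_subset)
    show "(insert (snd p) (fst p), snd p) \<in> Sigma (?S (Suc m)) (\<lambda>A. A)"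
      using p fa by auto
    show "(fst (insert (snd p) (fst p), snd p) - {snd (insert (snd p) (fst p), snd p)}, snd (insert (snd p) (fst p), snd p)) = p"
      using p by (cases p) auto
    show "(case (insert (snd p) (fst p), snd p) of (A, a) \<Rightarrow> \<Prod>a\<in>A. c a) = (case p of (A, a) \<Rightarrow> \<Prod>a\<in>insert a A. c a)" by (cases p) simp
  qed
  also have "\<dots> = (\<Sum>A\<in>?S (Suc m). \<Sum>a\<in>A. (\<Prod>a\<in>A. c a))"
    by (rule sum.Sigma[symmetric]) (use fS fin in \<open>auto intro: finite_subset\<close>)
  also have "\<dots> = real (Suc m) * esym c B (Suc m)"
    unfolding esym_def sum_distrib_left by (rule sum.cong) auto
  finally show ?thesis by simp
qed

lemma esym_approx:
  assumes fin: "finite B" and c0: "\<And>a. a \<in> B \<Longrightarrow> 0 \<le> c a" and cd: "\<And>a. a \<in> B \<Longrightarrow> c a \<le> \<delta>"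
    and d0: "0 \<le> \<delta>"
  shows "0 \<le> (\<Sum>a\<in>B. c a) ^ m / fact m - esym c B m \<and>
         (\<Sum>a\<in>B. c a) ^ m / fact m - esym c B m \<le> real m * \<delta> * ((\<Sum>a\<in>B. c a) + 1) ^ m"
proof (induction m)
  case 0
  then show ?case using esym_0[OF fin] by simp
next
  case (Suc m)
  define p where "p = (\<Sum>a\<in>B. c a)"
  define e where "e = esym c B m"
  define e' where "e' = esym c B (Suc m)"
  define R where "R = (\<Sum>A | A \<subseteq> B \<and> card A = m. (\<Prod>a\<in>A. c a) * (\<Sum>a\<in>A. c a))"
  define d where "d = p ^ m / fact m - e"
  have p0: "p \<ge> 0" unfolding p_def using c0 by (simp add: sum_nonneg)
  have rec: "p * e = real (Suc m) * e' + R" unfolding p_def e_def e'_def R_def by (rule esym_rec[OF fin])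
  have R0: "R \<ge> 0" unfolding R_def using c0 by (intro sum_nonneg mult_nonneg_nonneg prod_nonneg) auto
  have Rle: "R \<le> real m * \<delta> * e"
  proof -
    have "R \<le> (\<Sum>A | A \<subseteq> B \<and> card A = m. (\<Prod>a\<in>A. c a) * (real m * \<delta>))"
      unfolding R_def
    proof (rule sum_mono)
      fix A assume A: "A \<in> {A. A \<subseteq> B \<and> card A = m}"
      have "(\<Sum>a\<in>A. c a) \<le> (\<Sum>a\<in>A. \<delta>)" using A cd by (intro sum_mono) auto
      also have "\<dots> = real m * \<delta>" using A by simp
      finally show "(\<Prod>a\<in>A. c a) * (\<Sum>a\<in>A. c a) \<le> (\<Prod>a\<in>A. c a) * (real m * \<delta>)"
        using A c0 by (intro mult_left_mono prod_nonneg) auto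
    qed
    also have "\<dots> = real m * \<delta> * e" unfolding e_def esym_def by (simp add: sum_distrib_left mult.commute)
    finally show ?thesis .
  qed
  have IH: "0 \<le> d" "d \<le> real m * \<delta> * (p + 1) ^ m" using Suc.IH unfolding d_def p_def e_def by auto
  have e0: "e \<ge> 0" unfolding e_def using c0 by (rule esym_nonneg)
  have "e \<le> p ^ m / fact m" using IH(1) unfolding d_def by simp
  also have "\<dots> \<le> p ^ m" using p0 by (simp add: divide_le_eq_1 fact_ge_1 mult_le_cancel_left1 pos_divide_le_eq)
  also have "\<dots> \<le> (p + 1) ^ m" using p0 by (intro power_mono) auto
  finally have ele: "e \<le> (p + 1) ^ m" .
  have d'eq: "p ^ Suc m / fact (Suc m) - e' = (p * d + R) / real (Suc m)"
  proof -
    have e'eq: "e' = (p * e - R) / real (Suc m)" using rec by (simp add: field_simps)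
    have "p ^ Suc m / fact (Suc m) = p * (p ^ m / fact m) / real (Suc m)"
      by (simp add: field_simps)
    moreover have "\<And>X s. (s::real) \<noteq> 0 \<Longrightarrow> (p * X) / s - (p * e - R) / s = (p * (X - e) + R) / s"
      by (simp add: field_simps)
    moreover have "real (Suc m) \<noteq> 0" by simp
    ultimately show ?thesis unfolding e'eq d_def by metis
  qed
  have num0: "0 \<le> p * d + R" using p0 IH(1) R0 by simp
  have "(p * d + R) / real (Suc m) \<le> p * d + R" using num0 by (simp add: divide_le_eq mult_le_cancel_left1)
  also have "\<dots> \<le> p * (real m * \<delta> * (p + 1) ^ m) + real m * \<delta> * (p + 1) ^ m"
    using Rle ele e0 IH(2) p0 d0
    by (intro add_mono mult_left_mono order.trans[OF Rle] mult_left_mono) auto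
  also have "\<dots> = real m * \<delta> * (p + 1) ^ Suc m" by (simp add: algebra_simps)
  also have "\<dots> \<le> real (Suc m) * \<delta> * (p + 1) ^ Suc m" using d0 p0 by (intro mult_right_mono) auto
  finally show ?case unfolding p_def[symmetric] e'_def[symmetric] d'eq using num0 by simp
qed




definition rtn :: "nat \<Rightarrow> (nat \<Rightarrow> nat) \<Rightarrow> (nat \<Rightarrow> nat) set" where
  "rtn k T = {r. (\<forall>i. i \<notin> {1..k} \<longrightarrow> r i = 0) \<and> (\<forall>i\<in>{1..k}. 1 \<le> r i \<and> r i \<le> T i)
      \<and> (\<forall>i\<in>{1..<k}. r i < r (i+1))}"

definition Aset :: "nat \<Rightarrow> (nat \<Rightarrow> nat) \<Rightarrow> nat set set" where
  "Aset k T = {A. A \<subseteq> {1..T k} \<and> card A = k \<and> (\<forall>j\<in>{1..k}. j \<le> card (A \<inter> {..T j}))}"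

lemma smono_aux:
  fixes k i i' :: nat shows "\<forall>i\<in>{1..<k}. r i < (r (i+1) :: nat) \<Longrightarrow> 1 \<le> i \<Longrightarrow> i' \<le> k \<Longrightarrow> i < i' \<Longrightarrow> r i < r i'"
proof (induction i')
  case 0 then show ?case by simp
next
  case (Suc n)
  then have "n < k" by simp
  show ?case
  proof (cases "i = n")
    case True
    then show ?thesis using Suc.prems \<open>n < k\<close> by auto
  next
    case False
    then have "i < n" using Suc.prems by simp
    then have "r i < r n" using Suc.IH Suc.prems \<open>n < k\<close> by simp
    also have "r n < r (Suc n)" using Suc.prems \<open>n < k\<close> \<open>i < n\<close> by auto
    finally show ?thesis .
  qed
qed

lemma smono:
  fixes k i i' :: nat
  assumes "\<forall>i\<in>{1..<k}. r i < (r (i+1) :: nat)" "i \<in> {1..k}" "i' \<in> {1..k}" "i < i'"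
  shows "r i < r i'"
  using smono_aux[OF assms(1), of i i'] assms(2-4) by auto

lemma smono_inj:
  fixes k :: nat
  assumes "\<forall>i\<in>{1..<k}. r i < (r (i+1) :: nat)"
  shows "inj_on r {1..k}"
proof (rule inj_onI)
  fix x y assume "x \<in> {1..k}" "y \<in> {1..k}" "r x = r y"
  then show "x = y" using smono[OF assms, of x y] smono[OF assms, of y x]
    by (cases x y rule: linorder_cases) auto
qed

lemma smono_card:
  fixes k j :: nat
  assumes a: "\<forall>i\<in>{1..<k}. r i < (r (i+1) :: nat)" and j: "j \<in> {1..k}"
  shows "(j \<le> card (r ` {1..k} \<inter> {..x})) \<longleftrightarrow> r j \<le> x"
proof -
  have "r ` {1..k} \<inter> {..x} = r ` {i\<in>{1..k}. r i \<le> x}" by auto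
  moreover have "inj_on r {i\<in>{1..k}. r i \<le> x}"
    using smono_inj[OF a] by (rule inj_on_subset) auto
  ultimately have eq: "card (r ` {1..k} \<inter> {..x}) = card {i\<in>{1..k}. r i \<le> x}"
    by (simp add: card_image)
  show ?thesis
  proof
    assume "j \<le> card (r ` {1..k} \<inter> {..x})"
    then have jc: "j \<le> card {i\<in>{1..k}. r i \<le> x}" using eq by simp
    show "r j \<le> x"
    proof (rule ccontr)
      assume "\<not> r j \<le> x"
      have "{i\<in>{1..k}. r i \<le> x} \<subseteq> {1..<j}"
      proof
        fix i assume i: "i \<in> {i\<in>{1..k}. r i \<le> x}"
        have "i < j"
        proof (rule ccontr)
          assume "\<not> i < j"
          then have "r j \<le> r i" using smono[OF a j, of i] i by (cases "i = j") auto
          then show False using i \<open>\<not> r j \<le> x\<close> by simp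
        qed
        then show "i \<in> {1..<j}" using i by simp
      qed
      then have "card {i\<in>{1..k}. r i \<le> x} \<le> card {1..<j}" by (intro card_mono) auto
      then show False using jc j by simp arith
    qed
  next
    assume "r j \<le> x"
    have "{1..j} \<subseteq> {i\<in>{1..k}. r i \<le> x}"
    proof
      fix i assume i: "i \<in> {1..j}"
      then have "r i \<le> r j" using smono[OF a _ j, of i] j by (cases "i = j") auto
      then show "i \<in> {i\<in>{1..k}. r i \<le> x}" using i j \<open>r j \<le> x\<close> by simp
    qed
    then have "card {1..j} \<le> card {i\<in>{1..k}. r i \<le> x}" by (intro card_mono) auto
    then show "j \<le> card (r ` {1..k} \<inter> {..x})" using eq by simp
  qed
qed

lemma rtn_bij: "bij_betw (\<lambda>r. r ` {1..k}) (rtn k T) (Aset k T)"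
proof (rule bij_betw_imageI)
  show "inj_on (\<lambda>r. r ` {1..k}) (rtn k T)"
  proof (rule inj_onI)
    fix r r' assume r: "r \<in> rtn k T" and r': "r' \<in> rtn k T" and eq: "r ` {1..k} = r' ` {1..k}"
    have a: "\<forall>i\<in>{1..<k}. r i < r (i+1)" and a': "\<forall>i\<in>{1..<k}. r' i < r' (i+1)"
      using r r' unfolding rtn_def by auto
    show "r = r'"
    proof
      fix i show "r i = r' i"
      proof (cases "i \<in> {1..k}")
        case True
        have "r i \<le> x \<longleftrightarrow> r' i \<le> x" for x
          using smono_card[OF a True, of x] smono_card[OF a' True, of x] eq by simp
        then show ?thesis using le_antisym by blast
      next
        case False
        then show ?thesis using r r' unfolding rtn_def by auto
      qed
    qed
  qed
next
  show "(\<lambda>r. r ` {1..k}) ` rtn k T = Aset k T"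
  proof (intro equalityI subsetI)
    fix A assume "A \<in> (\<lambda>r. r ` {1..k}) ` rtn k T"
    then obtain r where r: "r \<in> rtn k T" and A: "A = r ` {1..k}" by auto
    have a: "\<forall>i\<in>{1..<k}. r i < r (i+1)" using r unfolding rtn_def by auto
    have "A \<subseteq> {1..T k}"
    proof
      fix x assume "x \<in> A"
      then obtain i where i: "i \<in> {1..k}" "x = r i" using A by auto
      have "r i \<le> r k" using smono[OF a i(1), of k] i by (cases "i = k") auto
      moreover have "1 \<le> r i" "r k \<le> T k" using r i unfolding rtn_def by auto
      ultimately show "x \<in> {1..T k}" using i by auto
    qed
    moreover have "card A = k" using A smono_inj[OF a] by (simp add: card_image)
    moreover have "\<forall>j\<in>{1..k}. j \<le> card (A \<inter> {..T j})"
      using smono_card[OF a] r A unfolding rtn_def by auto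
    ultimately show "A \<in> Aset k T" unfolding Aset_def by auto
  next
    fix A assume A: "A \<in> Aset k T"
    have fA: "finite A" using A unfolding Aset_def by (auto dest: finite_subset)
    define xs where "xs = sorted_list_of_set A"
    have len: "length xs = k" using A unfolding xs_def Aset_def by simp
    have sxs: "sorted_wrt (<) xs" unfolding xs_def by (rule strict_sorted_list_of_set)
    have setxs: "set xs = A" unfolding xs_def using fA by simp
    define r where "r i = (if i \<in> {1..k} then xs ! (i - 1) else 0)" for i
    have a: "\<forall>i\<in>{1..<k}. r i < r (i+1)"
      unfolding r_def using sorted_wrt_nth_less[OF sxs] len by auto
    have img: "r ` {1..k} = A"
    proof -
      have "r ` {1..k} = (\<lambda>i. xs ! (i - 1)) ` {1..k}" unfolding r_def by auto
      also have "\<dots> = (\<lambda>i. xs ! i) ` {0..<k}"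
      proof -
        have "{1..k} = Suc ` {0..<k}" by (auto simp: image_iff)
        then have "(\<lambda>i. xs ! (i - 1)) ` {1..k} = (\<lambda>i. xs ! (i - 1)) ` (Suc ` {0..<k})" by (simp only:)
        also have "\<dots> = (\<lambda>i. xs ! i) ` {0..<k}" unfolding image_image by simp
        finally show ?thesis .
      qed
      also have "\<dots> = set xs" using len by (auto simp: set_conv_nth)
      finally show ?thesis using setxs by simp
    qed
    have "r \<in> rtn k T"
      unfolding rtn_def
    proof (intro CollectI conjI ballI allI impI)
      fix i assume "i \<notin> {1..k}" then show "r i = 0" unfolding r_def by auto
    next
      fix i assume i: "i \<in> {1..k}"
      have "r i \<in> A" using img i by auto
      then show "1 \<le> r i" using A unfolding Aset_def by auto
      have "i \<le> card (A \<inter> {..T i})" using A i unfolding Aset_def by auto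
      then show "r i \<le> T i" using smono_card[OF a i, of "T i"] img by simp
    next
      fix i assume "i \<in> {1..<k}" then show "r i < r (i + 1)" using a by simp
    qed
    then show "A \<in> (\<lambda>r. r ` {1..k}) ` rtn k T" using img by force
  qed
qed

lemma sum_rtn_Aset:
  "(\<Sum>r\<in>rtn k T. \<Prod>i=1..k. c (r i)) = (\<Sum>A\<in>Aset k T. \<Prod>a\<in>A. (c a :: real))"
proof -
  have "(\<Sum>A\<in>Aset k T. \<Prod>a\<in>A. c a) = (\<Sum>r\<in>rtn k T. \<Prod>a\<in>r ` {1..k}. c a)"
    by (rule sum.reindex_bij_betw[OF rtn_bij, symmetric])
  also have "\<dots> = (\<Sum>r\<in>rtn k T. \<Prod>i=1..k. c (r i))"
  proof (rule sum.cong[OF refl])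
    fix r assume "r \<in> rtn k T"
    then have "inj_on r {1..k}" by (intro smono_inj) (auto simp: rtn_def)
    then show "(\<Prod>a\<in>r ` {1..k}. c a) = (\<Prod>i=1..k. c (r i))" by (simp add: prod.reindex)
  qed
  finally show ?thesis by simp
qed




lemma finite_ituples: "finite (ituples k)"
proof (rule finite_subset)
  show "ituples k \<subseteq> (\<lambda>g j. if j \<in> {1..<k} then g j else 0) ` (PiE {1..<k} (\<lambda>_. {0..k}))"
  proof
    fix f assume f: "f \<in> ituples k"
    let ?g = "restrict f {1..<k}"
    have "?g \<in> PiE {1..<k} (\<lambda>_. {0..k})" using f unfolding ituples_def by auto
    moreover have "f = (\<lambda>j. if j \<in> {1..<k} then ?g j else 0)" using f unfolding ituples_def by auto
    ultimately show "f \<in> (\<lambda>g j. if j \<in> {1..<k} then g j else 0) ` (PiE {1..<k} (\<lambda>_. {0..k}))" by blast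
  qed
  show "finite ((\<lambda>g j. if j \<in> {1..<k} then g j else 0) ` (PiE {1..<k} (\<lambda>_. {0..k})))"
    by (intro finite_imageI finite_PiE) auto
qed

lemma Tmono:
  fixes T :: "nat \<Rightarrow> 'a::order"
  assumes "\<forall>j<k. T j \<le> T (Suc j)" "j \<le> j'" "j' \<le> k"
  shows "T j \<le> T j'"
  using assms(2,3)
proof (induction j' arbitrary: j)
  case 0 then show ?case by simp
next
  case (Suc n)
  show ?case
  proof (cases "j = Suc n")
    case True then show ?thesis by simp
  next
    case False
    then have "T j \<le> T n" using Suc by simp
    also have "T n \<le> T (Suc n)" using assms(1) Suc.prems by simp
    finally show ?thesis .
  qed
qed

lemma blk_cover:
  assumes T0: "T 0 = 0" and Tm: "\<forall>j<k. T j \<le> (T (Suc j) :: nat)" and "j \<le> k"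
  shows "{1..T j} = (\<Union>j'\<in>{1..j}. {T (j'-1)<..T j'})"
  using assms(3)
proof (induction j)
  case 0 then show ?case using T0 by simp
next
  case (Suc n)
  have le: "T n \<le> T (Suc n)" using Tm Suc.prems by simp
  have "{1..T (Suc n)} = {1..T n} \<union> {T n<..T (Suc n)}" using le by auto
  also have "\<dots> = (\<Union>j'\<in>{1..n}. {T (j'-1)<..T j'}) \<union> {T (Suc n - 1)<..T (Suc n)}" using Suc by simp
  also have "\<dots> = (\<Union>j'\<in>{1..Suc n}. {T (j'-1)<..T j'})" by (auto simp: atLeastAtMostSuc_conv)
  finally show ?case .
qed

lemma ext_telescope:
  assumes "f \<in> ituples k" "j \<le> k"
  shows "(\<Sum>j'=1..j. ext_idx k f j' - ext_idx k f (j'-1)) = ext_idx k f j"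
  using assms(2)
proof (induction j)
  case 0 then show ?case by (simp add: ext_idx_def)
next
  case (Suc n)
  have "ext_idx k f n \<le> ext_idx k f (Suc n)" using assms(1) Suc.prems unfolding ituples_def by auto
  then show ?case using Suc by simp
qed

definition gA :: "nat \<Rightarrow> (nat \<Rightarrow> nat) \<Rightarrow> nat set \<Rightarrow> nat \<Rightarrow> nat" where
  "gA k T A = (\<lambda>j. if j \<in> {1..<k} then card (A \<inter> {..T j}) else 0)"

lemma ext_gA:
  assumes T0: "T 0 = 0" and A: "A \<in> Aset k T" and j: "j \<le> k"
  shows "ext_idx k (gA k T A) j = card (A \<inter> {..T j})"
proof -
  have sub: "A \<subseteq> {1..T k}" and cA: "card A = k" using A unfolding Aset_def by auto
  show ?thesis
  proof (cases "j = 0")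
    case True
    then have "A \<inter> {..T j} = {}" using sub T0 by auto
    then show ?thesis using True by (simp add: ext_idx_def)
  next
    case False
    show ?thesis
    proof (cases "j = k")
      case True
      then have "A \<inter> {..T j} = A" using sub by auto
      then show ?thesis using True False cA by (simp add: ext_idx_def)
    next
      case False2: False
      then show ?thesis using False j by (simp add: ext_idx_def gA_def)
    qed
  qed
qed

lemma gA_ituples:
  assumes T0: "T 0 = 0" and Tm: "\<forall>j<k. T j \<le> (T (Suc j) :: nat)" and A: "A \<in> Aset k T"
  shows "gA k T A \<in> ituples k"
proof -
  have sub: "A \<subseteq> {1..T k}" and cA: "card A = k" and cj: "\<forall>j\<in>{1..k}. j \<le> card (A \<inter> {..T j})"
    using A unfolding Aset_def by auto
  have fA: "finite A" using sub by (auto dest: finite_subset)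
  have "card (A \<inter> {..T j}) \<le> k" for j using card_mono[OF fA, of "A \<inter> {..T j}"] cA by auto
  moreover have "ext_idx k (gA k T A) j \<le> ext_idx k (gA k T A) (Suc j)" if "j < k" for j
  proof -
    have "card (A \<inter> {..T j}) \<le> card (A \<inter> {..T (Suc j)})"
      using Tm that fA by (intro card_mono) auto
    then show ?thesis using ext_gA[OF T0 A] that by simp
  qed
  ultimately show ?thesis using cj unfolding ituples_def gA_def by auto
qed

lemma finite_Aset: "finite (Aset k T)"
  by (rule finite_subset[of _ "Pow {1..T k}"]) (auto simp: Aset_def)

lemma class_sum:
  assumes T0: "T 0 = 0" and Tm: "\<forall>j<k. T j \<le> (T (Suc j) :: nat)" and f: "f \<in> ituples k"
  shows "(\<Sum>A\<in>{A\<in>Aset k T. gA k T A = f}. \<Prod>a\<in>A. c a)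
       = (\<Prod>j=1..k. esym c {T (j-1)<..T j} (ext_idx k f j - ext_idx k f (j-1)))"
proof -
  define B where "B j = {T (j-1)<..T j}" for j
  define m where "m j = ext_idx k f j - ext_idx k f (j-1)" for j
  define S where "S j = {A. A \<subseteq> B j \<and> card A = m j}" for j
  have finS: "finite (S j)" for j unfolding S_def B_def by (rule finite_subset[of _ "Pow {T (j-1)<..T j}"]) auto
  have Bsub: "B j' \<subseteq> {..T j}" if "j' \<le> j" "j \<le> k" for j j'
    using Tmono[OF Tm that] unfolding B_def by auto
  have Bdisj: "B j' \<inter> {..T j} = {}" if "j < j'" "j' \<le> k" for j j'
  proof -
    have "T j \<le> T (j'-1)" by (rule Tmono[OF Tm]) (use that in auto)
    then show ?thesis unfolding B_def by auto
  qed
  have "(\<Prod>j=1..k. esym c (B j) (m j)) = (\<Prod>j\<in>{1..k}. \<Sum>A\<in>S j. \<Prod>a\<in>A. c a)"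
    unfolding esym_def S_def by simp
  also have "\<dots> = (\<Sum>h\<in>PiE {1..k} S. \<Prod>j\<in>{1..k}. \<Prod>a\<in>h j. c a)"
    by (rule prod_sum_PiE) (auto simp: finS)
  also have "\<dots> = (\<Sum>h\<in>PiE {1..k} S. \<Prod>a\<in>(\<Union>j\<in>{1..k}. h j). c a)"
  proof (rule sum.cong[OF refl])
    fix h assume h: "h \<in> PiE {1..k} S"
    show "(\<Prod>j\<in>{1..k}. \<Prod>a\<in>h j. c a) = (\<Prod>a\<in>(\<Union>j\<in>{1..k}. h j). c a)"
    proof (rule prod.UNION_disjoint[symmetric])
      show "finite {1..k}" by simp
      show "\<forall>j\<in>{1..k}. finite (h j)" using h finS unfolding S_def B_def by (auto dest: finite_subset)
      show "\<forall>i\<in>{1..k}. \<forall>j\<in>{1..k}. i \<noteq> j \<longrightarrow> h i \<inter> h j = {}"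
      proof (intro ballI impI)
        fix i j assume ij: "i \<in> {1..k}" "j \<in> {1..k}" "i \<noteq> j"
        have hi: "h i \<subseteq> B i" "h j \<subseteq> B j" using h ij unfolding S_def by auto
        show "h i \<inter> h j = {}"
        proof (cases "i < j")
          case True
          then show ?thesis using hi Bsub[of i i] Bdisj[of i j] ij by auto
        next
          case False
          then have "j < i" using ij by simp
          then show ?thesis using hi Bsub[of j j] Bdisj[of j i] ij by auto
        qed
      qed
    qed
  qed
  also have "\<dots> = (\<Sum>A\<in>{A\<in>Aset k T. gA k T A = f}. \<Prod>a\<in>A. c a)"
  proof (rule sum.reindex_bij_betw)
    show "bij_betw (\<lambda>h. \<Union>j\<in>{1..k}. h j) (PiE {1..k} S) {A\<in>Aset k T. gA k T A = f}"
    proof (rule bij_betw_imageI)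
      show "inj_on (\<lambda>h. \<Union>j\<in>{1..k}. h j) (PiE {1..k} S)"
      proof (rule inj_onI)
        fix h h' assume h: "h \<in> PiE {1..k} S" and h': "h' \<in> PiE {1..k} S"
          and eq: "(\<Union>j\<in>{1..k}. h j) = (\<Union>j\<in>{1..k}. h' j)"
        have key: "(\<Union>j'\<in>{1..k}. g j') \<inter> B j = g j" if g: "g \<in> PiE {1..k} S" and j: "j \<in> {1..k}" for g j
        proof -
          have "g j' \<inter> B j = {}" if "j' \<in> {1..k}" "j' \<noteq> j" for j'
          proof -
            have gs: "g j' \<subseteq> B j'" using g that unfolding S_def by auto
            show ?thesis
            proof (cases "j' < j")
              case True then show ?thesis using gs Bsub[of j' j'] Bdisj[of j' j] j that by auto
            next
              case False then have "j < j'" using that by simp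
              then show ?thesis using gs Bsub[of j j] Bdisj[of j j'] j that by auto
            qed
          qed
          moreover have "g j \<subseteq> B j" using g j unfolding S_def by auto
          ultimately show ?thesis using j by blast
        qed
        show "h = h'"
        proof (rule PiE_ext[OF h h'])
          fix j assume "j \<in> {1..k}"
          then show "h j = h' j" using key[OF h] key[OF h'] eq by metis
        qed
      qed
    next
      show "(\<lambda>h. \<Union>j\<in>{1..k}. h j) ` PiE {1..k} S = {A\<in>Aset k T. gA k T A = f}"
      proof (intro equalityI subsetI)
        fix A assume "A \<in> (\<lambda>h. \<Union>j\<in>{1..k}. h j) ` PiE {1..k} S"
        then obtain h where h: "h \<in> PiE {1..k} S" and A: "A = (\<Union>j\<in>{1..k}. h j)" by auto
        have hs: "h j \<subseteq> B j" "card (h j) = m j" if "j \<in> {1..k}" for j using h that unfolding S_def by auto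
        have fh: "finite (h j)" if "j \<in> {1..k}" for j using hs[OF that] unfolding B_def by (auto dest: finite_subset)
        have cut: "A \<inter> {..T j} = (\<Union>j'\<in>{1..j}. h j')" if "j \<le> k" for j
        proof
          show "A \<inter> {..T j} \<subseteq> (\<Union>j'\<in>{1..j}. h j')"
          proof
            fix x assume x: "x \<in> A \<inter> {..T j}"
            then obtain j' where j': "j' \<in> {1..k}" "x \<in> h j'" using A by auto
            have "j' \<le> j"
            proof (rule ccontr)
              assume "\<not> j' \<le> j"
              then show False using Bdisj[of j j'] hs(1)[OF j'(1)] j' x by auto
            qed
            then show "x \<in> (\<Union>j'\<in>{1..j}. h j')" using j' by auto
          qed
          show "(\<Union>j'\<in>{1..j}. h j') \<subseteq> A \<inter> {..T j}"
          proof
            fix x assume "x \<in> (\<Union>j'\<in>{1..j}. h j')"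
            then obtain j' where j': "j' \<in> {1..j}" "x \<in> h j'" by auto
            then have j'k: "j' \<in> {1..k}" using that by auto
            have "x \<in> A" using A j'k j'(2) by auto
            moreover have "x \<in> {..T j}" using hs(1)[OF j'k] Bsub[of j' j] that j' by auto
            ultimately show "x \<in> A \<inter> {..T j}" by simp
          qed
        qed
        have ccut: "card (A \<inter> {..T j}) = ext_idx k f j" if "j \<le> k" for j
        proof -
          have "card (A \<inter> {..T j}) = (\<Sum>j'\<in>{1..j}. card (h j'))"
          proof -
            have "card (\<Union>j'\<in>{1..j}. h j') = (\<Sum>j'\<in>{1..j}. card (h j'))"
            proof (rule card_UN_disjoint)
              show "finite {1..j}" by simp
              show "\<forall>j'\<in>{1..j}. finite (h j')" using fh that by auto
              show "\<forall>i\<in>{1..j}. \<forall>j'\<in>{1..j}. i \<noteq> j' \<longrightarrow> h i \<inter> h j' = {}"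
              proof (intro ballI impI)
                fix i j' assume ij: "i \<in> {1..j}" "j' \<in> {1..j}" "i \<noteq> j'"
                have hi: "h i \<subseteq> B i" "h j' \<subseteq> B j'" using hs ij that by auto
                show "h i \<inter> h j' = {}"
                proof (cases "i < j'")
                  case True
                  then show ?thesis using hi Bsub[of i i] Bdisj[of i j'] ij that by auto
                next
                  case False
                  then have "j' < i" using ij by simp
                  then show ?thesis using hi Bsub[of j' j'] Bdisj[of j' i] ij that by auto
                qed
              qed
            qed
            then show ?thesis using cut[OF that] by simp
          qed
          also have "\<dots> = (\<Sum>j'\<in>{1..j}. m j')" using hs(2) that by (intro sum.cong) auto
          also have "\<dots> = ext_idx k f j" unfolding m_def using ext_telescope[OF f that] by simp
          finally show ?thesis .
        qed
        have "A \<subseteq> {1..T k}"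
        proof -
          have "A \<subseteq> (\<Union>j\<in>{1..k}. B j)" using A hs(1) by blast
          also have "\<dots> = {1..T k}" unfolding B_def using blk_cover[OF T0 Tm, of k] by simp
          finally show ?thesis .
        qed
        moreover have "card A = k"
        proof -
          have "A \<inter> {..T k} = A" using \<open>A \<subseteq> {1..T k}\<close> by auto
          then show ?thesis using ccut[of k] by (simp add: ext_idx_def)
        qed
        moreover have "\<forall>j\<in>{1..k}. j \<le> card (A \<inter> {..T j})"
        proof
          fix j assume j: "j \<in> {1..k}"
          show "j \<le> card (A \<inter> {..T j})"
            using ccut[of j] j f unfolding ituples_def ext_idx_def by (cases "j = k") auto
        qed
        ultimately have AA: "A \<in> Aset k T" unfolding Aset_def by auto
        have "gA k T A = f"
        proof
          fix j show "gA k T A j = f j"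
          proof (cases "j \<in> {1..<k}")
            case True
            then show ?thesis using ccut[of j] unfolding gA_def ext_idx_def by auto
          next
            case False
            then show ?thesis using f unfolding gA_def ituples_def by auto
          qed
        qed
        then show "A \<in> {A\<in>Aset k T. gA k T A = f}" using AA by simp
      next
        fix A assume A: "A \<in> {A\<in>Aset k T. gA k T A = f}"
        then have AA: "A \<in> Aset k T" and gf: "gA k T A = f" by auto
        have sub: "A \<subseteq> {1..T k}" using AA unfolding Aset_def by auto
        have fA: "finite A" using sub by (auto dest: finite_subset)
        define h where "h = restrict (\<lambda>j. A \<inter> B j) {1..k}"
        have "h \<in> PiE {1..k} S"
        proof
          fix j assume j: "j \<in> {1..k}"
          have "A \<inter> B j = A \<inter> {..T j} - A \<inter> {..T (j-1)}"
            unfolding B_def by auto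
          moreover have "A \<inter> {..T (j-1)} \<subseteq> A \<inter> {..T j}"
            using Tmono[OF Tm, of "j-1" j] j by auto
          ultimately have "card (A \<inter> B j) = card (A \<inter> {..T j}) - card (A \<inter> {..T (j-1)})"
            using fA by (simp add: card_Diff_subset)
          also have "\<dots> = m j"
          proof -
            have "j - 1 \<le> k" "j \<le> k" using j by auto
            then show ?thesis
              unfolding m_def using ext_gA[OF T0 AA, of j] ext_gA[OF T0 AA, of "j-1"] gf by simp
          qed
          finally show "h j \<in> S j" unfolding h_def S_def using j by auto
        next
          fix j assume "j \<notin> {1..k}" then show "h j = undefined" unfolding h_def by auto
        qed
        moreover have "(\<Union>j\<in>{1..k}. h j) = A"
        proof -
          have "(\<Union>j\<in>{1..k}. h j) = A \<inter> (\<Union>j\<in>{1..k}. B j)" unfolding h_def by auto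
          also have "(\<Union>j\<in>{1..k}. B j) = {1..T k}" unfolding B_def using blk_cover[OF T0 Tm, of k] by simp
          finally show ?thesis using sub by auto
        qed
        ultimately show "A \<in> (\<lambda>h. \<Union>j\<in>{1..k}. h j) ` PiE {1..k} S" by force
      qed
    qed
  qed
  finally show ?thesis unfolding B_def m_def by simp
qed

lemma sum_Aset_ituples:
  assumes T0: "T 0 = 0" and Tm: "\<forall>j<k. T j \<le> (T (Suc j) :: nat)"
  shows "(\<Sum>A\<in>Aset k T. \<Prod>a\<in>A. c a)
       = (\<Sum>f\<in>ituples k. \<Prod>j=1..k. esym c {T (j-1)<..T j} (ext_idx k f j - ext_idx k f (j-1)))"
proof -
  have "(\<Sum>A\<in>Aset k T. \<Prod>a\<in>A. c a) = (\<Sum>f\<in>ituples k. \<Sum>A\<in>{A\<in>Aset k T. gA k T A = f}. \<Prod>a\<in>A. c a)"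
    by (rule sum.group[symmetric]) (use finite_Aset finite_ituples gA_ituples[OF T0 Tm] in auto)
  also have "\<dots> = (\<Sum>f\<in>ituples k. \<Prod>j=1..k. esym c {T (j-1)<..T j} (ext_idx k f j - ext_idx k f (j-1)))"
    by (rule sum.cong[OF refl]) (rule class_sum[OF T0 Tm])
  finally show ?thesis .
qed




lemma power_diff_le:
  fixes a b L :: real
  assumes "0 \<le> a" "a \<le> L" "0 \<le> b" "b \<le> L" "1 \<le> L"
  shows "\<bar>a ^ m - b ^ m\<bar> \<le> real m * L ^ m * \<bar>a - b\<bar>"
proof (induction m)
  case 0 then show ?case by simp
next
  case (Suc m)
  have "a ^ Suc m - b ^ Suc m = a * (a ^ m - b ^ m) + b ^ m * (a - b)" by (simp add: algebra_simps)
  then have "\<bar>a ^ Suc m - b ^ Suc m\<bar> \<le> \<bar>a\<bar> * \<bar>a ^ m - b ^ m\<bar> + \<bar>b ^ m\<bar> * \<bar>a - b\<bar>"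
    by (metis abs_mult abs_triangle_ineq)
  also have "\<dots> \<le> L * (real m * L ^ m * \<bar>a - b\<bar>) + L ^ m * \<bar>a - b\<bar>"
  proof (intro add_mono mult_mono)
    show "\<bar>a\<bar> \<le> L" using assms by simp
    show "\<bar>b ^ m\<bar> \<le> L ^ m" using assms by (simp add: power_abs[symmetric] power_mono)
  qed (use Suc.IH assms in auto)
  also have "\<dots> \<le> L * (real m * L ^ m * \<bar>a - b\<bar>) + L ^ Suc m * \<bar>a - b\<bar>"
  proof -
    have "L ^ m \<le> L ^ Suc m" using assms by (simp add: power_increasing)
    then show ?thesis by (intro add_left_mono mult_right_mono) auto
  qed
  also have "\<dots> = real (Suc m) * L ^ Suc m * \<bar>a - b\<bar>" by (simp add: algebra_simps)
  finally show ?case .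
qed

lemma prod_diff_bound:
  fixes x y :: "'a \<Rightarrow> real"
  assumes "finite J" "1 \<le> M" "0 \<le> \<epsilon>"
    and "\<And>j. j \<in> J \<Longrightarrow> \<bar>x j\<bar> \<le> M" "\<And>j. j \<in> J \<Longrightarrow> \<bar>y j\<bar> \<le> M" "\<And>j. j \<in> J \<Longrightarrow> \<bar>x j - y j\<bar> \<le> \<epsilon>"
  shows "\<bar>(\<Prod>j\<in>J. x j) - (\<Prod>j\<in>J. y j)\<bar> \<le> real (card J) * M ^ card J * \<epsilon>"
  using assms(1,4-6)
proof (induction J rule: finite_induct)
  case empty then show ?case by simp
next
  case (insert a J)
  let ?n = "card J"
  have py: "\<bar>\<Prod>j\<in>J. y j\<bar> \<le> M ^ ?n"
  proof -
    have "\<bar>\<Prod>j\<in>J. y j\<bar> = (\<Prod>j\<in>J. \<bar>y j\<bar>)" by (simp add: abs_prod)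
    also have "\<dots> \<le> (\<Prod>j\<in>J. M)" using insert.prems by (intro prod_mono) auto
    finally show ?thesis by simp
  qed
  have IH: "\<bar>(\<Prod>j\<in>J. x j) - (\<Prod>j\<in>J. y j)\<bar> \<le> real ?n * M ^ ?n * \<epsilon>" using insert by auto
  have "(\<Prod>j\<in>insert a J. x j) - (\<Prod>j\<in>insert a J. y j)
      = x a * ((\<Prod>j\<in>J. x j) - (\<Prod>j\<in>J. y j)) + (\<Prod>j\<in>J. y j) * (x a - y a)"
    using insert by (simp add: algebra_simps)
  then have "\<bar>(\<Prod>j\<in>insert a J. x j) - (\<Prod>j\<in>insert a J. y j)\<bar>
      \<le> \<bar>x a\<bar> * \<bar>(\<Prod>j\<in>J. x j) - (\<Prod>j\<in>J. y j)\<bar> + \<bar>\<Prod>j\<in>J. y j\<bar> * \<bar>x a - y a\<bar>"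
    by (metis abs_mult abs_triangle_ineq)
  also have "\<dots> \<le> M * (real ?n * M ^ ?n * \<epsilon>) + M ^ ?n * \<epsilon>"
    using insert.prems IH py assms(2,3) by (intro add_mono mult_mono) auto
  also have "\<dots> \<le> M * (real ?n * M ^ ?n * \<epsilon>) + M ^ Suc ?n * \<epsilon>"
  proof -
    have "M ^ ?n \<le> M ^ Suc ?n" using assms by (simp add: power_increasing)
    then show ?thesis using assms(3) by (intro add_left_mono mult_right_mono) auto
  qed
  also have "\<dots> = real (card (insert a J)) * M ^ card (insert a J) * \<epsilon>"
    using insert by (simp add: algebra_simps)
  finally show ?case .
qed




definition dtau :: "(nat \<Rightarrow> real) \<Rightarrow> real \<Rightarrow> enat" where
  "dtau c u = (if \<exists>s. (\<Sum>r=1..s. c r) \<ge> u then enat (LEAST s. (\<Sum>r=1..s. c r) \<ge> u) else \<infinity>)"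

definition drt :: "(nat \<Rightarrow> real) \<Rightarrow> nat \<Rightarrow> (nat \<Rightarrow> real) \<Rightarrow> (nat \<Rightarrow> nat) set" where
  "drt c k t = {r. (\<forall>i. i \<notin> {1..k} \<longrightarrow> r i = 0)
      \<and> (\<forall>i\<in>{1..k}. 1 \<le> r i \<and> enat (r i) \<le> dtau c (t i))
      \<and> (\<forall>i\<in>{1..<k}. r i < r (i+1))}"

definition Vt :: "nat \<Rightarrow> (nat \<Rightarrow> real) \<Rightarrow> real" where
  "Vt k t = (\<Sum>f\<in>ituples k. \<Prod>j=1..k.
               (t j - t (j - 1)) ^ (ext_idx k f j - ext_idx k f (j - 1))
               / fact (ext_idx k f j - ext_idx k f (j - 1)))"

definition Kd :: "nat \<Rightarrow> real \<Rightarrow> real" where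
  "Kd k L = real (card (ituples k)) * (real k * ((L + 2) ^ k) ^ k * (2 * real k * (L + 2) ^ k))"

lemma sum_block:
  fixes a b :: nat
  assumes "a \<le> b"
  shows "(\<Sum>r\<in>{a<..b}. c r) = (\<Sum>r=1..b. c r) - (\<Sum>r=1..a. (c r :: real))"
proof -
  have "{1..b} = {1..a} \<union> {a<..b}" using assms by auto
  moreover have "{1..a} \<inter> {a<..b} = {}" by auto
  ultimately have "(\<Sum>r=1..b. c r) = (\<Sum>r=1..a. c r) + (\<Sum>r\<in>{a<..b}. c r)"
    by (simp add: sum.union_disjoint)
  then show ?thesis by simp
qed

lemma ituples_m_le:
  assumes "f \<in> ituples k" "j \<in> {1..k}"
  shows "ext_idx k f j - ext_idx k f (j - 1) \<le> k"
proof -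
  have "ext_idx k f j \<le> k" using assms unfolding ituples_def ext_idx_def by auto
  then show ?thesis by simp
qed

lemma det_main:
  fixes c :: "nat \<Rightarrow> real" and t :: "nat \<Rightarrow> real"
  assumes c0: "\<And>r. 0 \<le> c r" and t0: "t 0 = 0" and tm: "\<forall>j<k. t j \<le> t (Suc j)"
    and ex: "\<exists>s. t k \<le> (\<Sum>r=1..s. c r)"
    and small: "\<And>r. 1 \<le> r \<Longrightarrow> enat r \<le> dtau c (t k) \<Longrightarrow> c r \<le> \<delta>"
    and d0: "0 \<le> \<delta>" and d1: "\<delta> \<le> 1"
  shows "\<bar>(\<Sum>r\<in>drt c k t. \<Prod>i=1..k. c (r i)) - Vt k t\<bar> \<le> Kd k (t k) * \<delta>"
proof -
  define Cs where "Cs s = (\<Sum>r=1..s. c r)" for s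
  define T where "T j = (LEAST s. t j \<le> Cs s)" for j
  define L where "L = t k + 2"
  have tmono: "t j \<le> t j'" if "j \<le> j'" "j' \<le> k" for j j' using Tmono[OF tm that] .
  have tnn: "0 \<le> t j" if "j \<le> k" for j using tmono[of 0 j] that t0 by simp
  have exj: "\<exists>s. t j \<le> Cs s" if "j \<le> k" for j
    using ex tmono[OF that] unfolding Cs_def by (meson order.trans order.refl)
  have TI: "t j \<le> Cs (T j)" if "j \<le> k" for j unfolding T_def using exj[OF that] by (rule LeastI_ex)
  have Tlt: "Cs s < t j" if "s < T j" for j s unfolding T_def using not_less_Least[OF that[unfolded T_def]] by simp
  have dtau_eq: "dtau c (t j) = enat (T j)" if "j \<le> k" for j
    using exj[OF that] unfolding dtau_def T_def Cs_def by auto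
  have Cmono: "Cs s \<le> Cs s'" if "s \<le> s'" for s s'
    unfolding Cs_def using c0 that by (intro sum_mono2) auto
  have T0: "T 0 = 0" unfolding T_def using t0 by (simp add: Cs_def)
  have Tm: "\<forall>j<k. T j \<le> T (Suc j)"
  proof (intro allI impI)
    fix j assume j: "j < k"
    have "t j \<le> Cs (T (Suc j))" using tm j TI[of "Suc j"] by auto
    then show "T j \<le> T (Suc j)" unfolding T_def by (rule Least_le)
  qed
  have TleTk: "T j \<le> T k" if "j \<le> k" for j using Tmono[OF Tm that] by simp
  have Cup: "Cs (T j) \<le> t j + \<delta>" if j: "j \<le> k" for j
  proof (cases "T j = 0")
    case True
    then have "Cs (T j) = 0" unfolding Cs_def by simp
    then show ?thesis using tnn[OF j] d0 by simp
  next
    case False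
    then have "Cs (T j - 1) < t j" using Tlt by simp
    moreover have "Cs (T j) = Cs (T j - 1) + c (T j)"
      unfolding Cs_def using False by (cases "T j") auto
    moreover have "c (T j) \<le> \<delta>"
      using small[of "T j"] False dtau_eq[of k] TleTk[OF j] by simp
    ultimately show ?thesis by simp
  qed
  have drt_eq: "drt c k t = rtn k T"
    unfolding drt_def rtn_def using dtau_eq by auto
  have S_eq: "(\<Sum>r\<in>drt c k t. \<Prod>i=1..k. c (r i))
      = (\<Sum>f\<in>ituples k. \<Prod>j=1..k. esym c {T (j-1)<..T j} (ext_idx k f j - ext_idx k f (j-1)))"
    unfolding drt_eq sum_rtn_Aset using sum_Aset_ituples[OF T0 Tm] .
  have L1: "1 \<le> L" unfolding L_def using tnn[of k] by simp
  define \<epsilon> where "\<epsilon> = 2 * real k * L ^ k * \<delta>"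
  have eps0: "0 \<le> \<epsilon>" unfolding \<epsilon>_def using L1 d0 by simp
  have per_f: "\<bar>(\<Prod>j=1..k. esym c {T (j-1)<..T j} (ext_idx k f j - ext_idx k f (j-1)))
       - (\<Prod>j=1..k. (t j - t (j - 1)) ^ (ext_idx k f j - ext_idx k f (j - 1))
               / fact (ext_idx k f j - ext_idx k f (j - 1)))\<bar> \<le> real k * (L ^ k) ^ k * \<epsilon>"
    if f: "f \<in> ituples k" for f
  proof -
    have "\<bar>(\<Prod>j=1..k. esym c {T (j-1)<..T j} (ext_idx k f j - ext_idx k f (j-1)))
       - (\<Prod>j=1..k. (t j - t (j - 1)) ^ (ext_idx k f j - ext_idx k f (j - 1))
               / fact (ext_idx k f j - ext_idx k f (j - 1)))\<bar> \<le> real (card {1..k}) * (L ^ k) ^ card {1..k} * \<epsilon>"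
    proof (rule prod_diff_bound)
      show "1 \<le> L ^ k" using L1 by simp
      show "0 \<le> \<epsilon>" by (rule eps0)
    next
      fix j assume j: "j \<in> {1..k}"
      define m where "m = ext_idx k f j - ext_idx k f (j-1)"
      define p where "p = (\<Sum>r\<in>{T (j-1)<..T j}. c r)"
      define D where "D = t j - t (j - 1)"
      have mk: "m \<le> k" unfolding m_def using ituples_m_le[OF f j] .
      have jk: "j \<le> k" "j - 1 \<le> k" using j by auto
      have Tjj: "T (j-1) \<le> T j" using Tmono[OF Tm, of "j-1" j] j by auto
      have peq: "p = Cs (T j) - Cs (T (j-1))" unfolding p_def Cs_def by (rule sum_block[OF Tjj])
      have D0: "0 \<le> D" unfolding D_def using tmono[of "j-1" j] j by auto
      have tj1: "0 \<le> t (j-1)" using tnn[OF jk(2)] .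
      have DL: "D \<le> L" unfolding D_def L_def using tmono[of j k] tj1 j by auto
      have pD: "\<bar>p - D\<bar> \<le> \<delta>" unfolding peq D_def using TI[OF jk(1)] TI[OF jk(2)] Cup[OF jk(1)] Cup[OF jk(2)] by simp
      have p0: "0 \<le> p" unfolding p_def using c0 by (simp add: sum_nonneg)
      have pL: "p + 1 \<le> L" using pD DL d1 unfolding L_def D_def using tmono[of j k] tj1 j by auto
      have pL': "p \<le> L" using pL by simp
      have ea: "0 \<le> p ^ m / fact m - esym c {T (j-1)<..T j} m \<and>
         p ^ m / fact m - esym c {T (j-1)<..T j} m \<le> real m * \<delta> * (p + 1) ^ m"
      proof -
        have "c a \<le> \<delta>" if a: "a \<in> {T (j-1)<..T j}" for a
        proof (rule small)
          show "1 \<le> a" using a by auto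
          have "a \<le> T k" using a TleTk[OF jk(1)] by auto
          then show "enat a \<le> dtau c (t k)" using dtau_eq[of k] by simp
        qed
        then show ?thesis unfolding p_def by (intro esym_approx) (use c0 d0 in auto)
      qed
      have Lpow: "L ^ m \<le> L ^ k" using L1 mk by (simp add: power_increasing)
      have fm1: "1 \<le> (fact m :: real)" by simp
      have x0: "0 \<le> esym c {T (j-1)<..T j} m" by (rule esym_nonneg) (use c0 in auto)
      have pm: "p ^ m / fact m \<le> p ^ m" using p0 fm1 by (simp add: divide_le_eq mult_le_cancel_left1)
      have "p ^ m \<le> L ^ m" using p0 pL' by (intro power_mono) auto
      then have xb: "esym c {T (j-1)<..T j} m \<le> L ^ k" using ea pm Lpow by linarith
      show "\<bar>esym c {T (j-1)<..T j} (ext_idx k f j - ext_idx k f (j-1))\<bar> \<le> L ^ k"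
        using xb x0 unfolding m_def by simp
      have Dm: "D ^ m / fact m \<le> D ^ m" using D0 fm1 by (simp add: divide_le_eq mult_le_cancel_left1)
      have "D ^ m \<le> L ^ m" using D0 DL by (intro power_mono) auto
      then have yb: "D ^ m / fact m \<le> L ^ k" using Dm Lpow by linarith
      have y0: "0 \<le> D ^ m / fact m" using D0 by simp
      show "\<bar>(t j - t (j - 1)) ^ (ext_idx k f j - ext_idx k f (j - 1)) / fact (ext_idx k f j - ext_idx k f (j - 1))\<bar> \<le> L ^ k"
        using yb y0 unfolding m_def D_def by (metis abs_of_nonneg)
      have e1: "\<bar>esym c {T (j-1)<..T j} m - p ^ m / fact m\<bar> \<le> real k * \<delta> * L ^ k"
      proof -
        have "(p + 1) ^ m \<le> L ^ m" using p0 pL by (intro power_mono) auto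
        then have "(p + 1) ^ m \<le> L ^ k" using Lpow by simp
        then have "real m * \<delta> * (p + 1) ^ m \<le> real k * \<delta> * L ^ k"
          using mk d0 p0 by (intro mult_mono) auto
        then show ?thesis using ea by simp
      qed
      have e2: "\<bar>p ^ m / fact m - D ^ m / fact m\<bar> \<le> real k * L ^ k * \<delta>"
      proof -
        have "\<bar>p ^ m / fact m - D ^ m / fact m\<bar> = \<bar>p ^ m - D ^ m\<bar> / fact m"
          by (simp add: diff_divide_distrib[symmetric])
        also have "\<dots> \<le> \<bar>p ^ m - D ^ m\<bar>" using fm1 by (simp add: divide_le_eq mult_le_cancel_left1)
        also have "\<dots> \<le> real m * L ^ m * \<bar>p - D\<bar>" by (rule power_diff_le) (use p0 pL' D0 DL L1 in auto)
        also have "\<dots> \<le> real k * L ^ k * \<delta>"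
          using mk Lpow pD L1 by (intro mult_mono) auto
        finally show ?thesis .
      qed
      have "\<bar>esym c {T (j-1)<..T j} m - D ^ m / fact m\<bar> \<le> \<epsilon>"
        using e1 e2 unfolding \<epsilon>_def by (simp add: algebra_simps)
      then show "\<bar>esym c {T (j-1)<..T j} (ext_idx k f j - ext_idx k f (j-1)) -
           (t j - t (j - 1)) ^ (ext_idx k f j - ext_idx k f (j - 1)) / fact (ext_idx k f j - ext_idx k f (j - 1))\<bar> \<le> \<epsilon>"
        unfolding m_def D_def by simp
    qed simp
    then show ?thesis by simp
  qed
  have "\<bar>(\<Sum>r\<in>drt c k t. \<Prod>i=1..k. c (r i)) - Vt k t\<bar>
      = \<bar>\<Sum>f\<in>ituples k. ((\<Prod>j=1..k. esym c {T (j-1)<..T j} (ext_idx k f j - ext_idx k f (j-1)))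
       - (\<Prod>j=1..k. (t j - t (j - 1)) ^ (ext_idx k f j - ext_idx k f (j - 1))
               / fact (ext_idx k f j - ext_idx k f (j - 1))))\<bar>"
    unfolding S_eq Vt_def by (simp add: sum_subtractf)
  also have "\<dots> \<le> (\<Sum>f\<in>ituples k. \<bar>(\<Prod>j=1..k. esym c {T (j-1)<..T j} (ext_idx k f j - ext_idx k f (j-1)))
       - (\<Prod>j=1..k. (t j - t (j - 1)) ^ (ext_idx k f j - ext_idx k f (j - 1))
               / fact (ext_idx k f j - ext_idx k f (j - 1)))\<bar>)"
    by (rule sum_abs)
  also have "\<dots> \<le> (\<Sum>f\<in>ituples k. real k * (L ^ k) ^ k * \<epsilon>)"
    by (rule sum_mono) (rule per_f)
  also have "\<dots> = Kd k (t k) * \<delta>"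
    unfolding Kd_def \<epsilon>_def L_def by (simp add: algebra_simps)
  finally show ?thesis .
qed





lemma ffact2_nat: "ffact_r (real n) 2 = real n * (real n - 1)"
  by (simp add: ffact_r_def numeral_2_eq_2)

lemma ffact3_nat: "ffact_r (real n) 3 = real n * (real n - 1) * (real n - 2)"
  by (simp add: ffact_r_def numeral_3_eq_3 numeral_2_eq_2)

lemma ffact2_nonneg: "0 \<le> ffact_r (real n) 2"
  unfolding ffact2_nat by (cases n) auto

lemma ffact3_nonneg: "0 \<le> ffact_r (real n) 3"
proof -
  consider "n = 0" | "n = 1" | "n \<ge> 2" by linarith
  then show ?thesis
  proof cases
    case 3
    then have "real n - 2 \<ge> 0" "real n - 1 \<ge> 0" by auto
    then show ?thesis unfolding ffact3_nat by simp
  qed (auto simp: ffact_r_def numeral_3_eq_3 numeral_2_eq_2)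
qed

lemma ffact_bound: "\<bar>ffact_r (real n) k\<bar> \<le> (real n + real k) ^ k"
proof -
  have "\<bar>ffact_r (real n) k\<bar> = (\<Prod>j<k. \<bar>real n - real j\<bar>)" unfolding ffact_r_def by (simp add: abs_prod)
  also have "\<dots> \<le> (\<Prod>j<k. real n + real k)" by (intro prod_mono) auto
  finally show ?thesis by simp
qed

lemma cN_nonneg:
  assumes "N \<ge> 2" shows "0 \<le> cN nu N r \<omega>"
  unfolding cN_def using assms by (intro divide_nonneg_nonneg sum_nonneg ffact2_nonneg)

lemma cN_le1:
  assumes N: "N \<ge> 2" and tot: "(\<Sum>i=1..N. nu N r i \<omega>) = N"
  shows "cN nu N r \<omega> \<le> 1"
proof -
  have le: "nu N r i \<omega> \<le> N" if "i \<in> {1..N}" for i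
    using tot member_le_sum[of i "{1..N}" "\<lambda>i. nu N r i \<omega>"] that by simp
  have "(\<Sum>i=1..N. ffact_r (real (nu N r i \<omega>)) 2) \<le> (\<Sum>i=1..N. real (nu N r i \<omega>) * (real N - 1))"
  proof (rule sum_mono)
    fix i assume i: "i \<in> {1..N}"
    have "real (nu N r i \<omega>) - 1 \<le> real N - 1" using le[OF i] by simp
    then show "ffact_r (real (nu N r i \<omega>)) 2 \<le> real (nu N r i \<omega>) * (real N - 1)"
      unfolding ffact2_nat by (intro mult_left_mono) auto
  qed
  also have "\<dots> = real N * (real N - 1)"
    using tot by (simp add: sum_distrib_right[symmetric]) (metis of_nat_sum)
  finally have "(\<Sum>i=1..N. ffact_r (real (nu N r i \<omega>)) 2) \<le> ffact_r (real N) 2" by (simp add: ffact2_nat)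
  moreover have "ffact_r (real N) 2 > 0" using N by (simp add: ffact2_nat)
  ultimately show ?thesis unfolding cN_def by simp
qed

lemma tauN_eq: "tauN nu N u \<omega> = dtau (\<lambda>r. cN nu N r \<omega>) u"
  unfolding tauN_def dtau_def ..

lemma rtuples_eq: "rtuples nu N k t \<omega> = drt (\<lambda>r. cN nu N r \<omega>) k t"
  unfolding rtuples_def drt_def tauN_eq ..

lemma enat_le_dtau:
  assumes c0: "\<And>r. 0 \<le> c r" and r: "1 \<le> r"
  shows "enat r \<le> dtau c u \<longleftrightarrow> (\<Sum>s=1..r-1. c s) < u"
proof -
  define Cs where "Cs s = (\<Sum>r=1..s. c r)" for s
  have Cmono: "Cs s \<le> Cs s'" if "s \<le> s'" for s s'
    unfolding Cs_def using c0 that by (intro sum_mono2) auto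
  show ?thesis
  proof (cases "\<exists>s. u \<le> Cs s")
    case True
    define L where "L = (LEAST s. u \<le> Cs s)"
    have dt: "dtau c u = enat L" using True unfolding dtau_def L_def Cs_def by auto
    have "r \<le> L \<longleftrightarrow> Cs (r - 1) < u"
    proof
      assume "r \<le> L"
      then have "r - 1 < L" using r by simp
      then show "Cs (r - 1) < u" using not_less_Least[of "r-1" "\<lambda>s. u \<le> Cs s"] unfolding L_def by simp
    next
      assume a: "Cs (r - 1) < u"
      have "u \<le> Cs L" unfolding L_def using True by (rule LeastI_ex)
      show "r \<le> L"
      proof (rule ccontr)
        assume "\<not> r \<le> L"
        then have "L \<le> r - 1" by simp
        then have "Cs L \<le> Cs (r - 1)" by (rule Cmono)
        then show False using a \<open>u \<le> Cs L\<close> by simp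
      qed
    qed
    then show ?thesis using dt unfolding Cs_def by simp
  next
    case False
    then have "dtau c u = \<infinity>" unfolding dtau_def Cs_def by auto
    then show ?thesis using False unfolding Cs_def by (simp add: not_le)
  qed
qed




definition Gen :: "(nat \<Rightarrow> 'a measure) \<Rightarrow> (nat \<Rightarrow> nat \<Rightarrow> nat \<Rightarrow> 'a \<Rightarrow> nat) \<Rightarrow> nat \<Rightarrow> nat \<Rightarrow> 'a set set" where
  "Gen M nu N t = {nu N s i -` A \<inter> space (M N) | s i A. 1 \<le> s \<and> s \<le> t \<and> 1 \<le> i \<and> i \<le> N}"

lemma Gen_Pow: "Gen M nu N t \<subseteq> Pow (space (M N))"
  unfolding Gen_def by auto

lemma filt_Gen: "filt M nu N t = sigma (space (M N)) (Gen M nu N t)"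
  unfolding filt_def Gen_def ..

lemma space_filt: "space (filt M nu N t) = space (M N)"
  unfolding filt_Gen using Gen_Pow by (rule space_measure_of)

lemma sets_filt: "sets (filt M nu N t) = sigma_sets (space (M N)) (Gen M nu N t)"
  unfolding filt_Gen using Gen_Pow by (rule sets_measure_of)

lemma nu_meas_filt:
  assumes "1 \<le> s" "s \<le> t" "1 \<le> i" "i \<le> N"
  shows "nu N s i \<in> measurable (filt M nu N t) (count_space UNIV)"
proof (rule measurableI)
  fix A :: "nat set" assume "A \<in> sets (count_space UNIV)"
  have "nu N s i -` A \<inter> space (M N) \<in> Gen M nu N t" unfolding Gen_def using assms by blast
  then show "nu N s i -` A \<inter> space (filt M nu N t) \<in> sets (filt M nu N t)"
    unfolding space_filt sets_filt by (rule sigma_sets.Basic)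
qed simp

lemma subalg_filt:
  assumes meas: "\<And>s i. nu N s i \<in> measurable (M N) (count_space UNIV)"
  shows "subalgebra (M N) (filt M nu N t)"
  unfolding subalgebra_def
proof
  show "space (filt M nu N t) = space (M N)" by (rule space_filt)
  have "Gen M nu N t \<subseteq> sets (M N)"
    unfolding Gen_def using measurable_sets[OF meas] by auto
  then show "sets (filt M nu N t) \<subseteq> sets (M N)"
    unfolding sets_filt by (rule sets.sigma_sets_subset)
qed

lemma comp_nat_meas:
  assumes "f \<in> measurable MM (count_space UNIV)"
  shows "(\<lambda>\<omega>. g (f \<omega>) :: real) \<in> borel_measurable MM"
  using measurable_compose[OF assms, of g borel] by simp

lemma cN_meas_gen:
  assumes N: "\<And>i. 1 \<le> i \<Longrightarrow> i \<le> N \<Longrightarrow> nu N r i \<in> measurable MM (count_space UNIV)"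
  shows "cN nu N r \<in> borel_measurable MM"
proof -
  have "(\<lambda>\<omega>. \<Sum>i=1..N. ffact_r (real (nu N r i \<omega>)) 2) \<in> borel_measurable MM"
    by (rule borel_measurable_sum) (use N comp_nat_meas in auto)
  then have "(\<lambda>\<omega>. (\<Sum>i=1..N. ffact_r (real (nu N r i \<omega>)) 2) / ffact_r (real N) 2) \<in> borel_measurable MM"
    by measurable
  then show ?thesis unfolding cN_def[abs_def] .
qed

lemma cN_meas:
  assumes meas: "\<And>s i. nu N s i \<in> measurable (M N) (count_space UNIV)"
  shows "cN nu N r \<in> borel_measurable (M N)"
  by (rule cN_meas_gen) (use meas in auto)

lemma cN_meas_filt:
  assumes "1 \<le> r" "r \<le> t"
  shows "cN nu N r \<in> borel_measurable (filt M nu N t)"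
  by (rule cN_meas_gen) (use nu_meas_filt assms in auto)

lemma Cs_meas:
  assumes meas: "\<And>s i. nu N s i \<in> measurable (M N) (count_space UNIV)"
  shows "(\<lambda>\<omega>. \<Sum>r=1..s. cN nu N r \<omega>) \<in> borel_measurable (M N)"
proof (rule borel_measurable_sum)
  fix r show "cN nu N r \<in> borel_measurable (M N)" by (rule cN_meas) (rule meas)
qed

lemma Cs_meas_filt:
  assumes "s \<le> t"
  shows "(\<lambda>\<omega>. \<Sum>r=1..s. cN nu N r \<omega>) \<in> borel_measurable (filt M nu N t)"
proof (rule borel_measurable_sum)
  fix r assume "r \<in> {1..s}"
  then show "cN nu N r \<in> borel_measurable (filt M nu N t)" using assms by (intro cN_meas_filt) auto
qed




locale mstep =
  fixes M :: "nat \<Rightarrow> 'a measure" and nu :: "nat \<Rightarrow> nat \<Rightarrow> nat \<Rightarrow> 'a \<Rightarrow> nat" and N :: nat and b :: real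
  assumes prob: "prob_space (M N)"
    and meas: "\<And>s i. nu N s i \<in> measurable (M N) (count_space UNIV)"
    and total: "\<And>s \<omega>. s \<ge> 1 \<Longrightarrow> \<omega> \<in> space (M N) \<Longrightarrow> (\<Sum>i=1..N. nu N s i \<omega>) = N"
    and N3: "N \<ge> 3"
    and mom: "\<forall>s\<ge>1. AE \<omega> in M N.
        (\<Sum>i=1..N. real_cond_exp (M N) (filt M nu N (s - 1)) (\<lambda>x. ffact_r (real (nu N s i x)) 3) \<omega>)
          / ffact_r (real N) 3
        \<le> b * ((\<Sum>i=1..N. real_cond_exp (M N) (filt M nu N (s - 1)) (\<lambda>x. ffact_r (real (nu N s i x)) 2) \<omega>)
          / ffact_r (real N) 2)"


context mstep begin

interpretation P: prob_space "M N" by (rule prob)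

lemma subalgF: "subalgebra (M N) (filt M nu N t)"
  by (rule subalg_filt) (rule meas)

lemma nu_le_N: "s \<ge> 1 \<Longrightarrow> \<omega> \<in> space (M N) \<Longrightarrow> i \<in> {1..N} \<Longrightarrow> nu N s i \<omega> \<le> N"
  using total member_le_sum[of i "{1..N}" "\<lambda>i. nu N s i \<omega>"] by simp

lemma gint: "s \<ge> 1 \<Longrightarrow> i \<in> {1..N} \<Longrightarrow> h \<in> borel_measurable (M N) \<Longrightarrow> (\<And>x. \<bar>h x\<bar> \<le> 1) \<Longrightarrow>
   integrable (M N) (\<lambda>x. h x * ffact_r (real (nu N s i x)) k)"
proof -
  assume s: "s \<ge> 1" and i: "i \<in> {1..N}" and hm: "h \<in> borel_measurable (M N)" and hb: "\<And>x. \<bar>h x\<bar> \<le> 1"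
  show ?thesis
  proof (rule P.integrable_const_bound[where B = "(real N + real k) ^ k"])
    show "AE x in M N. norm (h x * ffact_r (real (nu N s i x)) k) \<le> (real N + real k) ^ k"
    proof (rule AE_I2)
      fix x assume x: "x \<in> space (M N)"
      have "\<bar>ffact_r (real (nu N s i x)) k\<bar> \<le> (real (nu N s i x) + real k) ^ k" by (rule ffact_bound)
      also have "\<dots> \<le> (real N + real k) ^ k" using nu_le_N[OF s x i] by (intro power_mono) auto
      finally have "\<bar>h x\<bar> * \<bar>ffact_r (real (nu N s i x)) k\<bar> \<le> 1 * (real N + real k) ^ k"
        using hb[of x] by (intro mult_mono) auto
      then show "norm (h x * ffact_r (real (nu N s i x)) k) \<le> (real N + real k) ^ k" by (simp add: abs_mult)
    qed
    show "(\<lambda>x. h x * ffact_r (real (nu N s i x)) k) \<in> borel_measurable (M N)"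
      using hm comp_nat_meas[OF meas[of s i], of "\<lambda>n. ffact_r (real n) k"] by measurable
  qed
qed

lemma gint1: "s \<ge> 1 \<Longrightarrow> i \<in> {1..N} \<Longrightarrow> integrable (M N) (\<lambda>x. ffact_r (real (nu N s i x)) k)"
  using gint[of s i "\<lambda>_. 1" k] by simp

lemma ffN3: "ffact_r (real N) 3 > 0" "ffact_r (real N) 2 > 0"
  using N3 by (auto simp: ffact3_nat ffact2_nat)

definition X3 :: "nat \<Rightarrow> 'a \<Rightarrow> real" where
  "X3 r \<omega> = (\<Sum>i=1..N. ffact_r (real (nu N r i \<omega>)) 3) / ffact_r (real N) 3"

lemma condexp_step:
  fixes r :: nat and F :: "'a set"
  assumes r: "r \<ge> 1" and F: "F \<in> sets (filt M nu N (r - 1))"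
  shows "(\<integral>\<omega>. indicator F \<omega> * X3 r \<omega> \<partial>M N) \<le> b * (\<integral>\<omega>. indicator F \<omega> * cN nu N r \<omega> \<partial>M N)"
proof -
  let ?FF = "filt M nu N (r - 1)"
  interpret FS: finite_measure_subalgebra "M N" ?FF
    by unfold_locales (rule subalgF)
  have Fm: "F \<in> sets (M N)" using F subalgF[of "r - 1"] unfolding subalgebra_def by auto
  have indF: "indicator F \<in> borel_measurable ?FF" using F by simp
  have indM: "indicator F \<in> borel_measurable (M N)" using Fm by simp
  define g where "g k i = (\<lambda>x. ffact_r (real (nu N r i x)) k)" for k i
  define ce where "ce k i = real_cond_exp (M N) ?FF (g k i)" for k i
  have gm: "g k i \<in> borel_measurable (M N)" for k i
    unfolding g_def using comp_nat_meas[OF meas[of r i], of "\<lambda>n. ffact_r (real n) k"] by simp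
  have int_g: "integrable (M N) (\<lambda>x. indicator F x * g k i x)" if "i \<in> {1..N}" for k i
    unfolding g_def by (rule gint[OF r that indM]) (simp add: indicator_def)
  have ce_eq: "(\<integral>x. indicator F x * ce k i x \<partial>M N) = (\<integral>x. indicator F x * g k i x \<partial>M N)"
    and int_ce: "integrable (M N) (\<lambda>x. indicator F x * ce k i x)" if "i \<in> {1..N}" for k i
    unfolding ce_def using FS.real_cond_exp_intg[OF int_g[OF that] indF gm] by auto
  define D3 where "D3 = ffact_r (real N) 3"
  define D2 where "D2 = ffact_r (real N) 2"
  have eqL: "(\<lambda>\<omega>. (\<Sum>i=1..N. indicator F \<omega> * ce 3 i \<omega>) / D3) = (\<lambda>\<omega>. indicator F \<omega> * ((\<Sum>i=1..N. ce 3 i \<omega>) / D3))"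
    by (rule ext, unfold sum_distrib_left[symmetric], simp)
  have eqR: "(\<lambda>\<omega>. b * ((\<Sum>i=1..N. indicator F \<omega> * ce 2 i \<omega>) / D2)) = (\<lambda>\<omega>. indicator F \<omega> * (b * ((\<Sum>i=1..N. ce 2 i \<omega>) / D2)))"
    by (rule ext, unfold sum_distrib_left[symmetric], simp)
  have L: "(\<integral>\<omega>. indicator F \<omega> * X3 r \<omega> \<partial>M N) = (\<integral>\<omega>. indicator F \<omega> * ((\<Sum>i=1..N. ce 3 i \<omega>) / D3) \<partial>M N)"
  proof -
    have "(\<integral>\<omega>. indicator F \<omega> * X3 r \<omega> \<partial>M N) = (\<integral>\<omega>. (\<Sum>i=1..N. indicator F \<omega> * g 3 i \<omega>) / D3 \<partial>M N)"
      unfolding X3_def g_def D3_def by (simp only: sum_distrib_left[symmetric] times_divide_eq_right)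
    also have "\<dots> = (\<integral>\<omega>. (\<Sum>i=1..N. indicator F \<omega> * g 3 i \<omega>) \<partial>M N) / D3"
      by (rule integral_divide_zero)
    also have "\<dots> = (\<Sum>i=1..N. \<integral>\<omega>. indicator F \<omega> * g 3 i \<omega> \<partial>M N) / D3"
    proof -
      have "(\<integral>\<omega>. (\<Sum>i=1..N. indicator F \<omega> * g 3 i \<omega>) \<partial>M N) = (\<Sum>i=1..N. \<integral>\<omega>. indicator F \<omega> * g 3 i \<omega> \<partial>M N)"
        by (rule Bochner_Integration.integral_sum[where f="\<lambda>i \<omega>. indicator F \<omega> * g 3 i \<omega>"], rule int_g)
      then show ?thesis by (simp only:)
    qed
    also have "\<dots> = (\<Sum>i=1..N. \<integral>\<omega>. indicator F \<omega> * ce 3 i \<omega> \<partial>M N) / D3"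
      using ce_eq by simp
    also have "\<dots> = (\<integral>\<omega>. (\<Sum>i=1..N. indicator F \<omega> * ce 3 i \<omega>) \<partial>M N) / D3"
    proof -
      have "(\<integral>\<omega>. (\<Sum>i=1..N. indicator F \<omega> * ce 3 i \<omega>) \<partial>M N) = (\<Sum>i=1..N. \<integral>\<omega>. indicator F \<omega> * ce 3 i \<omega> \<partial>M N)"
        by (rule Bochner_Integration.integral_sum[where f="\<lambda>i \<omega>. indicator F \<omega> * ce 3 i \<omega>"], rule int_ce)
      then show ?thesis by (simp only:)
    qed
    also have "\<dots> = (\<integral>\<omega>. (\<Sum>i=1..N. indicator F \<omega> * ce 3 i \<omega>) / D3 \<partial>M N)"
      by (rule integral_divide_zero[symmetric])
    also have "\<dots> = (\<integral>\<omega>. indicator F \<omega> * ((\<Sum>i=1..N. ce 3 i \<omega>) / D3) \<partial>M N)"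
      unfolding eqL ..
    finally show ?thesis .
  qed
  have R: "b * (\<integral>\<omega>. indicator F \<omega> * cN nu N r \<omega> \<partial>M N) = (\<integral>\<omega>. indicator F \<omega> * (b * ((\<Sum>i=1..N. ce 2 i \<omega>) / D2)) \<partial>M N)"
  proof -
    have "(\<integral>\<omega>. indicator F \<omega> * cN nu N r \<omega> \<partial>M N) = (\<integral>\<omega>. (\<Sum>i=1..N. indicator F \<omega> * g 2 i \<omega>) / D2 \<partial>M N)"
      unfolding cN_def g_def D2_def by (simp only: sum_distrib_left[symmetric] times_divide_eq_right)
    also have "\<dots> = (\<integral>\<omega>. (\<Sum>i=1..N. indicator F \<omega> * g 2 i \<omega>) \<partial>M N) / D2"
      by (rule integral_divide_zero)
    also have "\<dots> = (\<Sum>i=1..N. \<integral>\<omega>. indicator F \<omega> * g 2 i \<omega> \<partial>M N) / D2"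
    proof -
      have "(\<integral>\<omega>. (\<Sum>i=1..N. indicator F \<omega> * g 2 i \<omega>) \<partial>M N) = (\<Sum>i=1..N. \<integral>\<omega>. indicator F \<omega> * g 2 i \<omega> \<partial>M N)"
        by (rule Bochner_Integration.integral_sum[where f="\<lambda>i \<omega>. indicator F \<omega> * g 2 i \<omega>"], rule int_g)
      then show ?thesis by (simp only:)
    qed
    also have "\<dots> = (\<Sum>i=1..N. \<integral>\<omega>. indicator F \<omega> * ce 2 i \<omega> \<partial>M N) / D2"
      using ce_eq by simp
    also have "\<dots> = (\<integral>\<omega>. (\<Sum>i=1..N. indicator F \<omega> * ce 2 i \<omega>) \<partial>M N) / D2"
    proof -
      have "(\<integral>\<omega>. (\<Sum>i=1..N. indicator F \<omega> * ce 2 i \<omega>) \<partial>M N) = (\<Sum>i=1..N. \<integral>\<omega>. indicator F \<omega> * ce 2 i \<omega> \<partial>M N)"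
        by (rule Bochner_Integration.integral_sum[where f="\<lambda>i \<omega>. indicator F \<omega> * ce 2 i \<omega>"], rule int_ce)
      then show ?thesis by (simp only:)
    qed
    also have "\<dots> = (\<integral>\<omega>. (\<Sum>i=1..N. indicator F \<omega> * ce 2 i \<omega>) / D2 \<partial>M N)"
      by (rule integral_divide_zero[symmetric])
    finally have "b * (\<integral>\<omega>. indicator F \<omega> * cN nu N r \<omega> \<partial>M N) = b * (\<integral>\<omega>. (\<Sum>i=1..N. indicator F \<omega> * ce 2 i \<omega>) / D2 \<partial>M N)"
      by simp
    also have "\<dots> = (\<integral>\<omega>. b * ((\<Sum>i=1..N. indicator F \<omega> * ce 2 i \<omega>) / D2) \<partial>M N)"
      by simp
    also have "\<dots> = (\<integral>\<omega>. indicator F \<omega> * (b * ((\<Sum>i=1..N. ce 2 i \<omega>) / D2)) \<partial>M N)"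
      unfolding eqR ..
    finally show ?thesis .
  qed
  have intL: "integrable (M N) (\<lambda>\<omega>. indicator F \<omega> * ((\<Sum>i=1..N. ce 3 i \<omega>) / D3))"
  proof -
    have "integrable (M N) (\<lambda>\<omega>. (\<Sum>i=1..N. indicator F \<omega> * ce 3 i \<omega>) / D3)"
      by (intro integrable_divide_zero Bochner_Integration.integrable_sum int_ce)
    then show ?thesis unfolding eqL .
  qed
  have intR: "integrable (M N) (\<lambda>\<omega>. indicator F \<omega> * (b * ((\<Sum>i=1..N. ce 2 i \<omega>) / D2)))"
  proof -
    have "integrable (M N) (\<lambda>\<omega>. b * ((\<Sum>i=1..N. indicator F \<omega> * ce 2 i \<omega>) / D2))"
      by (intro integrable_mult_right integrable_divide_zero Bochner_Integration.integrable_sum int_ce)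
    then show ?thesis unfolding eqR .
  qed
  have AEi: "AE \<omega> in M N. indicator F \<omega> * ((\<Sum>i=1..N. ce 3 i \<omega>) / D3) \<le> indicator F \<omega> * (b * ((\<Sum>i=1..N. ce 2 i \<omega>) / D2))"
  proof -
    have "AE \<omega> in M N. (\<Sum>i=1..N. ce 3 i \<omega>) / D3 \<le> b * ((\<Sum>i=1..N. ce 2 i \<omega>) / D2)"
      using mom r unfolding ce_def g_def D3_def D2_def by auto
    then show ?thesis by eventually_elim (simp add: indicator_def)
  qed
  show ?thesis unfolding L R by (rule integral_mono_AE[OF intL intR AEi])
qed

end




lemma sum_ind_le:
  fixes c :: "nat \<Rightarrow> real"
  assumes c0: "\<And>r. 1 \<le> r \<Longrightarrow> 0 \<le> c r" and c1: "\<And>r. 1 \<le> r \<Longrightarrow> c r \<le> 1" and u0: "0 \<le> u"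
  shows "(\<Sum>r=1..n. (if (\<Sum>s=1..r-1. c s) < u then c r else 0)) \<le> u + 1"
proof -
  define Cs where "Cs n = (\<Sum>s=1..n. c s)" for n
  define Sm where "Sm n = (\<Sum>r=1..n. (if Cs (r - 1) < u then c r else 0))" for n
  have Cmono: "Cs s \<le> Cs s'" if "s \<le> s'" for s s'
    unfolding Cs_def using c0 that by (intro sum_mono2) auto
  have "((n = 0 \<or> Cs (n - 1) < u) \<longrightarrow> Sm n = Cs n) \<and> Sm n \<le> u + 1"
  proof (induction n)
    case 0 then show ?case using u0 by (simp add: Sm_def Cs_def)
  next
    case (Suc n)
    have SmS: "Sm (Suc n) = Sm n + (if Cs n < u then c (Suc n) else 0)"
      unfolding Sm_def by simp
    show ?case
    proof (cases "Cs n < u")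
      case True
      have "n = 0 \<or> Cs (n - 1) < u"
      proof (cases n)
        case (Suc m)
        then have "Cs (n - 1) \<le> Cs n" by (intro Cmono) auto
        then show ?thesis using True by simp
      qed simp
      then have "Sm n = Cs n" using Suc.IH by simp
      then have eq: "Sm (Suc n) = Cs (Suc n)" using SmS True unfolding Cs_def by simp
      have "Cs (Suc n) \<le> u + 1" using True c1[of "Suc n"] unfolding Cs_def by simp
      then show ?thesis using eq by simp
    next
      case False
      then show ?thesis using SmS Suc.IH by simp
    qed
  qed
  then show ?thesis unfolding Sm_def Cs_def by simp
qed

context mstep begin

interpretation P: prob_space "M N" by (rule prob)

lemma c_sq_bound:
  assumes r: "r \<ge> 1" and w: "\<omega> \<in> space (M N)"
  shows "(cN nu N r \<omega>)^2 \<le> X3 r \<omega> + cN nu N r \<omega> / (real N - 1)"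
proof -
  define a where "a i = real (nu N r i \<omega>)" for i
  define S2 where "S2 = (\<Sum>i=1..N. a i * (a i - 1))"
  define S3 where "S3 = (\<Sum>i=1..N. a i * (a i - 1) * (a i - 2))"
  define n where "n = real N"
  have a0: "a i \<ge> 0" for i unfolding a_def by simp
  have sa: "(\<Sum>i=1..N. a i) = n" unfolding a_def n_def using total[OF r w] by (metis of_nat_sum)
  have n3: "n \<ge> 3" unfolding n_def using N3 by simp
  have S3_0: "S3 \<ge> 0" unfolding S3_def a_def using ffact3_nonneg by (simp add: ffact3_nat sum_nonneg)
  have S2_0: "S2 \<ge> 0" unfolding S2_def a_def using ffact2_nonneg by (simp add: ffact2_nat sum_nonneg)
  have CS: "S2^2 \<le> n * (S3 + S2)"
  proof -
    have "S2 = (\<Sum>i=1..N. sqrt (a i) * (sqrt (a i) * (a i - 1)))"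
      unfolding S2_def using a0 by (intro sum.cong) (auto simp: real_sqrt_mult_self mult.assoc[symmetric])
    then have "S2^2 \<le> (\<Sum>i=1..N. (sqrt (a i))^2) * (\<Sum>i=1..N. (sqrt (a i) * (a i - 1))^2)"
      using Cauchy_Schwarz_ineq_sum by simp
    also have "(\<Sum>i=1..N. (sqrt (a i))^2) = n" using a0 sa by simp
    also have "(\<Sum>i=1..N. (sqrt (a i) * (a i - 1))^2) = S3 + S2"
      unfolding S3_def S2_def sum.distrib[symmetric] using a0
      by (intro sum.cong) (auto simp: power_mult_distrib power2_eq_square algebra_simps)
    finally show ?thesis .
  qed
  have c_eq: "cN nu N r \<omega> = S2 / (n * (n - 1))"
    unfolding cN_def S2_def a_def n_def by (simp add: ffact2_nat)
  have X_eq: "X3 r \<omega> = S3 / (n * (n - 1) * (n - 2))"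
    unfolding X3_def S3_def a_def n_def by (simp add: ffact3_nat)
  define Q where "Q = n^2 * (n - 1)^2 * (n - 2)"
  have Q0: "Q > 0" unfolding Q_def using n3 by simp
  have nz: "n \<noteq> 0" "n - 1 \<noteq> 0" "n - 2 \<noteq> 0" using n3 by auto
  have lhs: "(S2 / (n * (n - 1)))^2 = S2^2 * (n - 2) / Q"
  proof -
    have "(S2 / (n * (n - 1)))^2 = S2^2 / (n * (n - 1))^2" by (simp add: power_divide)
    also have "\<dots> = S2^2 * (n - 2) / Q"
    proof (subst frac_eq_eq)
      show "(n * (n - 1))^2 \<noteq> 0" "Q \<noteq> 0" using nz Q0 by auto
      show "S2\<^sup>2 * Q = S2\<^sup>2 * (n - 2) * (n * (n - 1))\<^sup>2" unfolding Q_def by (simp add: power2_eq_square algebra_simps)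
    qed
    finally show ?thesis .
  qed
  have rhs: "S3 / (n * (n - 1) * (n - 2)) + S2 / (n * (n - 1)) / (n - 1) = (S3 * n * (n - 1) + S2 * n * (n - 2)) / Q"
  proof -
    have e1: "S3 / (n * (n - 1) * (n - 2)) = S3 * n * (n - 1) / Q"
    proof (subst frac_eq_eq)
      show "n * (n - 1) * (n - 2) \<noteq> 0" "Q \<noteq> 0" using nz Q0 by auto
      show "S3 * Q = S3 * n * (n - 1) * (n * (n - 1) * (n - 2))" unfolding Q_def by (simp add: power2_eq_square algebra_simps)
    qed
    have e2: "S2 / (n * (n - 1)) / (n - 1) = S2 * n * (n - 2) / Q"
      unfolding divide_divide_eq_left
    proof (subst frac_eq_eq)
      show "n * (n - 1) * (n - 1) \<noteq> 0" "Q \<noteq> 0" using nz Q0 by auto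
      show "S2 * Q = S2 * n * (n - 2) * (n * (n - 1) * (n - 1))" unfolding Q_def by (simp add: power2_eq_square algebra_simps)
    qed
    show ?thesis unfolding e1 e2 by (simp add: add_divide_distrib)
  qed
  have "S2^2 * (n - 2) \<le> n * (S3 + S2) * (n - 2)" using CS n3 by (intro mult_right_mono) auto
  also have "\<dots> \<le> S3 * n * (n - 1) + S2 * n * (n - 2)"
  proof -
    have "n * S3 * (n - 2) \<le> n * S3 * (n - 1)" using n3 S3_0 by (intro mult_left_mono) auto
    then show ?thesis by (simp add: algebra_simps)
  qed
  finally have "S2^2 * (n - 2) / Q \<le> (S3 * n * (n - 1) + S2 * n * (n - 2)) / Q"
    using Q0 by (intro divide_right_mono) auto
  then show ?thesis unfolding c_eq X_eq lhs n_def[symmetric] rhs .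
qed

end




context mstep begin

interpretation P: prob_space "M N" by (rule prob)

definition beta :: real where "beta = \<bar>b\<bar> + 1 / (real N - 1)"

lemma N2: "N \<ge> 2" using N3 by simp

lemma c_nonneg: "0 \<le> cN nu N r \<omega>" using cN_nonneg[OF N2] .

lemma c_le1: assumes "r \<ge> 1" "\<omega> \<in> space (M N)" shows "cN nu N r \<omega> \<le> 1"
  using cN_le1[where nu=nu and r=r and \<omega>=\<omega>, OF N2 total[OF assms]] .

lemma cmeas[measurable]: "cN nu N r \<in> borel_measurable (M N)"
  by (rule cN_meas) (rule meas)

lemma Csmeas[measurable]: "(\<lambda>\<omega>. \<Sum>r=1..s. cN nu N r \<omega>) \<in> borel_measurable (M N)"
  by (rule Cs_meas) (rule meas)

lemma int_indc: "F \<in> sets (M N) \<Longrightarrow> r \<ge> 1 \<Longrightarrow> integrable (M N) (\<lambda>\<omega>. indicator F \<omega> * cN nu N r \<omega>)"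
proof (rule P.integrable_const_bound[where B=1])
  assume F: "F \<in> sets (M N)" and r: "r \<ge> 1"
  show "AE x in M N. norm (indicator F x * cN nu N r x) \<le> 1"
  proof (rule AE_I2)
    fix x assume x: "x \<in> space (M N)"
    have "cN nu N r x \<le> 1" "0 \<le> cN nu N r x" using c_le1[OF r x] c_nonneg[of r x] by auto
    then show "norm (indicator F x * cN nu N r x) \<le> 1" by (simp add: indicator_def)
  qed
  show "(\<lambda>\<omega>. indicator F \<omega> * cN nu N r \<omega>) \<in> borel_measurable (M N)" using F by measurable
qed

lemma int_indc2: "F \<in> sets (M N) \<Longrightarrow> r \<ge> 1 \<Longrightarrow> integrable (M N) (\<lambda>\<omega>. indicator F \<omega> * (cN nu N r \<omega>)^2)"
proof (rule P.integrable_const_bound[where B=1])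
  assume F: "F \<in> sets (M N)" and r: "r \<ge> 1"
  show "AE x in M N. norm (indicator F x * (cN nu N r x)\<^sup>2) \<le> 1"
  proof (rule AE_I2)
    fix x assume x: "x \<in> space (M N)"
    have "(cN nu N r x)^2 \<le> 1" using c_le1[OF r x] c_nonneg[of r x] by (simp add: power_le_one)
    then show "norm (indicator F x * (cN nu N r x)\<^sup>2) \<le> 1" by (simp add: indicator_def)
  qed
  show "(\<lambda>\<omega>. indicator F \<omega> * (cN nu N r \<omega>)^2) \<in> borel_measurable (M N)" using F by measurable
qed

lemma int_indX: "F \<in> sets (M N) \<Longrightarrow> r \<ge> 1 \<Longrightarrow> integrable (M N) (\<lambda>\<omega>. indicator F \<omega> * X3 r \<omega>)"
proof -
  assume F: "F \<in> sets (M N)" and r: "r \<ge> 1"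
  have eq: "(\<lambda>\<omega>. indicator F \<omega> * X3 r \<omega>) = (\<lambda>\<omega>. (\<Sum>i=1..N. indicator F \<omega> * ffact_r (real (nu N r i \<omega>)) 3) / ffact_r (real N) 3)"
    unfolding X3_def by (rule ext, unfold sum_distrib_left[symmetric], simp)
  show ?thesis unfolding eq
    by (intro integrable_divide_zero Bochner_Integration.integrable_sum gint[OF r])
       (use F in \<open>auto simp: indicator_def\<close>)
qed

lemma sq_step:
  assumes r: "r \<ge> 1" and F: "F \<in> sets (filt M nu N (r - 1))"
  shows "(\<integral>\<omega>. indicator F \<omega> * (cN nu N r \<omega>)^2 \<partial>M N) \<le> beta * (\<integral>\<omega>. indicator F \<omega> * cN nu N r \<omega> \<partial>M N)"
proof -
  have Fm: "F \<in> sets (M N)" using F subalgF[of "r - 1"] unfolding subalgebra_def by auto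
  have I0: "0 \<le> (\<integral>\<omega>. indicator F \<omega> * cN nu N r \<omega> \<partial>M N)"
    by (rule Bochner_Integration.integral_nonneg) (simp add: c_nonneg)
  have "(\<integral>\<omega>. indicator F \<omega> * (cN nu N r \<omega>)^2 \<partial>M N)
      \<le> (\<integral>\<omega>. indicator F \<omega> * X3 r \<omega> + (indicator F \<omega> * cN nu N r \<omega>) / (real N - 1) \<partial>M N)"
  proof (rule integral_mono)
    show "integrable (M N) (\<lambda>\<omega>. indicator F \<omega> * (cN nu N r \<omega>)^2)" by (rule int_indc2[OF Fm r])
    show "integrable (M N) (\<lambda>\<omega>. indicator F \<omega> * X3 r \<omega> + (indicator F \<omega> * cN nu N r \<omega>) / (real N - 1))"
      by (intro Bochner_Integration.integrable_add integrable_divide_zero int_indX[OF Fm r] int_indc[OF Fm r])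
    fix \<omega> assume w: "\<omega> \<in> space (M N)"
    show "indicator F \<omega> * (cN nu N r \<omega>)^2 \<le> indicator F \<omega> * X3 r \<omega> + (indicator F \<omega> * cN nu N r \<omega>) / (real N - 1)"
      using c_sq_bound[OF r w] by (simp add: indicator_def)
  qed
  also have "\<dots> = (\<integral>\<omega>. indicator F \<omega> * X3 r \<omega> \<partial>M N) + (\<integral>\<omega>. indicator F \<omega> * cN nu N r \<omega> \<partial>M N) / (real N - 1)"
    by (simp add: Bochner_Integration.integral_add int_indX[OF Fm r] int_indc[OF Fm r])
  also have "\<dots> \<le> b * (\<integral>\<omega>. indicator F \<omega> * cN nu N r \<omega> \<partial>M N) + (\<integral>\<omega>. indicator F \<omega> * cN nu N r \<omega> \<partial>M N) / (real N - 1)"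
    using condexp_step[OF r F] by simp
  also have "\<dots> \<le> \<bar>b\<bar> * (\<integral>\<omega>. indicator F \<omega> * cN nu N r \<omega> \<partial>M N) + (\<integral>\<omega>. indicator F \<omega> * cN nu N r \<omega> \<partial>M N) / (real N - 1)"
    using I0 by (intro add_right_mono mult_right_mono) auto
  also have "\<dots> = beta * (\<integral>\<omega>. indicator F \<omega> * cN nu N r \<omega> \<partial>M N)"
    unfolding beta_def by (simp add: algebra_simps)
  finally show ?thesis .
qed

lemma markov_step:
  assumes r: "r \<ge> 1" and F: "F \<in> sets (filt M nu N (r - 1))" and d: "\<delta> > 0"
  shows "measure (M N) (F \<inter> {\<omega>. \<delta> < cN nu N r \<omega>}) \<le> beta / \<delta>^2 * (\<integral>\<omega>. indicator F \<omega> * cN nu N r \<omega> \<partial>M N)"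
proof -
  have Fm: "F \<in> sets (M N)" using F subalgF[of "r - 1"] unfolding subalgebra_def by auto
  have Fs: "F \<subseteq> space (M N)" using sets.sets_into_space[OF Fm] .
  define A where "A = F \<inter> {\<omega>. \<delta> < cN nu N r \<omega>}"
  have A_eq: "A = F \<inter> {\<omega> \<in> space (M N). \<delta> < cN nu N r \<omega>}" unfolding A_def using Fs by auto
  have Am: "A \<in> sets (M N)" unfolding A_eq using Fm by measurable
  have "measure (M N) A = (\<integral>\<omega>. indicator A \<omega> \<partial>M N)" using Am Fs by (simp add: A_def Int_absorb2)
  also have "\<dots> \<le> (\<integral>\<omega>. indicator F \<omega> * (cN nu N r \<omega>)^2 / \<delta>^2 \<partial>M N)"
  proof (rule integral_mono)
    show "integrable (M N) (indicator A :: 'a \<Rightarrow> real)" using Am by (intro integrable_real_indicator) (auto simp: less_top[symmetric])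
    show "integrable (M N) (\<lambda>\<omega>. indicator F \<omega> * (cN nu N r \<omega>)^2 / \<delta>^2)"
      by (intro integrable_divide_zero int_indc2[OF Fm r])
    fix \<omega> assume w: "\<omega> \<in> space (M N)"
    show "indicator A \<omega> \<le> indicator F \<omega> * (cN nu N r \<omega>)^2 / \<delta>^2"
    proof (cases "\<omega> \<in> A")
      case True
      then have "\<delta>^2 \<le> (cN nu N r \<omega>)^2" "\<omega> \<in> F" unfolding A_def using d by (auto intro!: power_mono)
      then show ?thesis using True d by simp
    next
      case False
      then show ?thesis by (simp add: indicator_def)
    qed
  qed
  also have "\<dots> = (\<integral>\<omega>. indicator F \<omega> * (cN nu N r \<omega>)^2 \<partial>M N) / \<delta>^2" by simp
  also have "\<dots> \<le> beta * (\<integral>\<omega>. indicator F \<omega> * cN nu N r \<omega> \<partial>M N) / \<delta>^2"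
    using sq_step[OF r F] d by (intro divide_right_mono) auto
  also have "\<dots> = beta / \<delta>^2 * (\<integral>\<omega>. indicator F \<omega> * cN nu N r \<omega> \<partial>M N)" by simp
  finally show ?thesis unfolding A_def .
qed

end




context mstep begin

interpretation P: prob_space "M N" by (rule prob)

definition Fr :: "nat \<Rightarrow> real \<Rightarrow> 'a set" where
  "Fr r u = {\<omega> \<in> space (M N). (\<Sum>s=1..r-1. cN nu N s \<omega>) < u}"

lemma Fr_filt: "Fr r u \<in> sets (filt M nu N (r - 1))"
proof -
  have [measurable]: "(\<lambda>\<omega>. \<Sum>s=1..r-1. cN nu N s \<omega>) \<in> borel_measurable (filt M nu N (r - 1))"
    by (rule Cs_meas_filt) simp
  have "{\<omega> \<in> space (filt M nu N (r - 1)). (\<Sum>s=1..r-1. cN nu N s \<omega>) < u} \<in> sets (filt M nu N (r - 1))"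
    by measurable
  then show ?thesis unfolding Fr_def space_filt .
qed

lemma Fr_sets: "Fr r u \<in> sets (M N)"
  using Fr_filt[of r u] subalgF[of "r - 1"] unfolding subalgebra_def by auto

lemma sum_int_bound:
  assumes u0: "0 \<le> u"
  shows "(\<Sum>r=1..n. \<integral>\<omega>. indicator (Fr r u) \<omega> * cN nu N r \<omega> \<partial>M N) \<le> u + 1"
proof -
  have "(\<Sum>r=1..n. \<integral>\<omega>. indicator (Fr r u) \<omega> * cN nu N r \<omega> \<partial>M N)
      = (\<integral>\<omega>. (\<Sum>r=1..n. indicator (Fr r u) \<omega> * cN nu N r \<omega>) \<partial>M N)"
    by (rule Bochner_Integration.integral_sum[where f="\<lambda>r \<omega>. indicator (Fr r u) \<omega> * cN nu N r \<omega>", symmetric])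
       (rule int_indc[OF Fr_sets], simp)
  also have "\<dots> \<le> (\<integral>\<omega>. u + 1 \<partial>M N)"
  proof (rule integral_mono)
    show "integrable (M N) (\<lambda>\<omega>. \<Sum>r=1..n. indicator (Fr r u) \<omega> * cN nu N r \<omega>)"
      by (rule Bochner_Integration.integrable_sum, rule int_indc[OF Fr_sets]) simp
    show "integrable (M N) (\<lambda>\<omega>. u + 1)" by simp
    fix \<omega> assume w: "\<omega> \<in> space (M N)"
    have "(\<Sum>r=1..n. indicator (Fr r u) \<omega> * cN nu N r \<omega>)
        = (\<Sum>r=1..n. (if (\<Sum>s=1..r-1. cN nu N s \<omega>) < u then cN nu N r \<omega> else 0))"
      using w by (intro sum.cong) (auto simp: Fr_def indicator_def)
    also have "\<dots> \<le> u + 1"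
      by (rule sum_ind_le) (use c_nonneg c_le1 w u0 in auto)
    finally show "(\<Sum>r=1..n. indicator (Fr r u) \<omega> * cN nu N r \<omega>) \<le> u + 1" .
  qed
  also have "\<dots> = u + 1" by (simp add: P.prob_space)
  finally show ?thesis .
qed

lemma beta_nonneg: "0 \<le> beta"
  unfolding beta_def using N3 by simp

lemma PH_bound:
  assumes u0: "0 \<le> u" and d: "\<delta> > 0"
  shows "measure (M N) {\<omega> \<in> space (M N). \<exists>r\<ge>1. (\<Sum>s=1..r-1. cN nu N s \<omega>) < u \<and> \<delta> < cN nu N r \<omega>}
         \<le> beta * (u + 1) / \<delta>^2"
proof -
  define A where "A r = Fr r u \<inter> {\<omega>. \<delta> < cN nu N r \<omega>}" for r
  define H where "H n = (\<Union>r\<in>{1..n}. A r)" for n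
  have As: "A r \<in> sets (M N)" for r
  proof -
    have "A r = Fr r u \<inter> {\<omega> \<in> space (M N). \<delta> < cN nu N r \<omega>}"
      unfolding A_def Fr_def by auto
    also have "\<dots> \<in> sets (M N)" using Fr_sets[of r u] by measurable
    finally show ?thesis .
  qed
  have Hs: "H n \<in> sets (M N)" for n unfolding H_def using As by auto
  have Hb: "measure (M N) (H n) \<le> beta * (u + 1) / \<delta>^2" for n
  proof -
    have "measure (M N) (H n) \<le> (\<Sum>r\<in>{1..n}. measure (M N) (A r))"
      unfolding H_def by (rule measure_UNION_le) (use As in auto)
    also have "\<dots> \<le> (\<Sum>r\<in>{1..n}. beta / \<delta>^2 * (\<integral>\<omega>. indicator (Fr r u) \<omega> * cN nu N r \<omega> \<partial>M N))"
      unfolding A_def by (intro sum_mono markov_step Fr_filt d) auto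
    also have "\<dots> = beta / \<delta>^2 * (\<Sum>r\<in>{1..n}. (\<integral>\<omega>. indicator (Fr r u) \<omega> * cN nu N r \<omega> \<partial>M N))"
      by (simp add: sum_distrib_left)
    also have "\<dots> \<le> beta / \<delta>^2 * (u + 1)"
      using sum_int_bound[OF u0, of n] beta_nonneg d by (intro mult_left_mono) auto
    finally show ?thesis by simp
  qed
  have inc: "incseq H" unfolding H_def incseq_def by (auto, meson atLeastAtMost_iff order.trans)
  have lim: "(\<lambda>n. measure (M N) (H n)) \<longlonglongrightarrow> measure (M N) (\<Union>n. H n)"
    by (rule P.finite_Lim_measure_incseq) (use Hs inc in auto)
  have "(\<Union>n. H n) = {\<omega> \<in> space (M N). \<exists>r\<ge>1. (\<Sum>s=1..r-1. cN nu N s \<omega>) < u \<and> \<delta> < cN nu N r \<omega>}"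
    unfolding H_def A_def Fr_def by (auto, metis atLeastAtMost_iff order_refl)
  then show ?thesis using LIMSEQ_le_const2[OF lim] Hb by auto
qed

end




definition Rn :: "nat \<Rightarrow> nat \<Rightarrow> (nat \<Rightarrow> nat) set" where
  "Rn k n = {r. (\<forall>i. i \<notin> {1..k} \<longrightarrow> r i = 0) \<and> (\<forall>i\<in>{1..k}. r i \<le> n)}"

lemma finite_Rn: "finite (Rn k n)"
proof (rule finite_subset)
  show "Rn k n \<subseteq> (\<lambda>g j. if j \<in> {1..k} then g j else 0) ` (PiE {1..k} (\<lambda>_. {0..n}))"
  proof
    fix f assume f: "f \<in> Rn k n"
    let ?g = "restrict f {1..k}"
    have "?g \<in> PiE {1..k} (\<lambda>_. {0..n})" using f unfolding Rn_def by auto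
    moreover have "f = (\<lambda>j. if j \<in> {1..k} then ?g j else 0)" using f unfolding Rn_def by auto
    ultimately show "f \<in> (\<lambda>g j. if j \<in> {1..k} then g j else 0) ` (PiE {1..k} (\<lambda>_. {0..n}))" by blast
  qed
  show "finite ((\<lambda>g j. if j \<in> {1..k} then g j else 0) ` (PiE {1..k} (\<lambda>_. {0..n})))"
    by (intro finite_imageI finite_PiE) auto
qed

lemma Rn_mono: "n \<le> n' \<Longrightarrow> Rn k n \<subseteq> Rn k n'"
  unfolding Rn_def by auto

lemma drt_sub_Rn: "r \<in> drt c k t \<Longrightarrow> r \<in> Rn k (\<Sum>i\<in>{1..k}. r i)"
  unfolding drt_def Rn_def by (auto intro: member_le_sum)

lemma finite_drt_iff:
  "finite (drt c k t) \<longleftrightarrow> (\<exists>n. \<forall>m. \<forall>r\<in>Rn k m. r \<in> drt c k t \<longrightarrow> r \<in> Rn k n)"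
proof
  assume fin: "finite (drt c k t)"
  define n where "n = (\<Sum>r\<in>drt c k t. \<Sum>i\<in>{1..k}. r i)"
  have "r \<in> Rn k n" if "r \<in> drt c k t" for r
  proof -
    have "(\<Sum>i\<in>{1..k}. r i) \<le> n" unfolding n_def using fin that by (intro member_le_sum) auto
    then show ?thesis using Rn_mono drt_sub_Rn[OF that] by blast
  qed
  then show "\<exists>n. \<forall>m. \<forall>r\<in>Rn k m. r \<in> drt c k t \<longrightarrow> r \<in> Rn k n" by blast
next
  assume "\<exists>n. \<forall>m. \<forall>r\<in>Rn k m. r \<in> drt c k t \<longrightarrow> r \<in> Rn k n"
  then obtain n where n: "\<forall>m. \<forall>r\<in>Rn k m. r \<in> drt c k t \<longrightarrow> r \<in> Rn k n" by blast
  have "drt c k t \<subseteq> Rn k n" using n drt_sub_Rn by blast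
  then show "finite (drt c k t)" using finite_Rn finite_subset by blast
qed

lemma drt_mem_iff:
  assumes c0: "\<And>r. 0 \<le> c r"
  shows "r \<in> drt c k t \<longleftrightarrow> ((\<forall>i. i \<notin> {1..k} \<longrightarrow> r i = 0) \<and> (\<forall>i\<in>{1..k}. 1 \<le> r i)
      \<and> (\<forall>i\<in>{1..<k}. r i < r (i+1))) \<and> (\<forall>i\<in>{1..k}. (\<Sum>s=1..r i - 1. c s) < t i)"
  unfolding drt_def using enat_le_dtau[OF c0] by auto

context mstep begin

interpretation P: prob_space "M N" by (rule prob)

definition SS :: "nat \<Rightarrow> (nat \<Rightarrow> real) \<Rightarrow> 'a \<Rightarrow> real" where
  "SS k t \<omega> = (\<Sum>r\<in>rtuples nu N k t \<omega>. \<Prod>i=1..k. cN nu N (r i) \<omega>)"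

lemma mem_pred[measurable]: "Measurable.pred (M N) (\<lambda>\<omega>. r \<in> rtuples nu N k t \<omega>)"
proof -
  have eq: "(\<lambda>\<omega>. r \<in> rtuples nu N k t \<omega>) = (\<lambda>\<omega>. ((\<forall>i. i \<notin> {1..k} \<longrightarrow> r i = 0) \<and> (\<forall>i\<in>{1..k}. 1 \<le> r i)
      \<and> (\<forall>i\<in>{1..<k}. r i < r (i+1))) \<and> (\<forall>i\<in>{1..k}. (\<Sum>s=1..r i - 1. cN nu N s \<omega>) < t i))"
    unfolding rtuples_eq by (intro ext) (rule drt_mem_iff[OF c_nonneg])
  show ?thesis unfolding eq by measurable
qed

lemma SS_meas: "SS k t \<in> borel_measurable (M N)"
proof -
  define Fin where "Fin \<omega> \<longleftrightarrow> (\<exists>n. \<forall>m. \<forall>r\<in>Rn k m. r \<in> rtuples nu N k t \<omega> \<longrightarrow> r \<in> Rn k n)" for \<omega>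
  have Fin_iff: "Fin \<omega> \<longleftrightarrow> finite (rtuples nu N k t \<omega>)" for \<omega>
    unfolding Fin_def rtuples_eq finite_drt_iff ..
  have [measurable]: "Measurable.pred (M N) Fin"
    unfolding Fin_def
    apply (rule pred_intros_countable(2))
    apply (rule pred_intros_countable(1))
    apply (rule pred_intros_finite(3)[OF finite_Rn])
    apply measurable
    done
  define u where "u n \<omega> = (if Fin \<omega> then (\<Sum>r\<in>Rn k n. if r \<in> rtuples nu N k t \<omega> then (\<Prod>i=1..k. cN nu N (r i) \<omega>) else 0) else 0)" for n \<omega>
  have um: "u n \<in> borel_measurable (M N)" for n
  proof -
    have [measurable]: "(\<lambda>\<omega>. if r \<in> rtuples nu N k t \<omega> then (\<Prod>i=1..k. cN nu N (r i) \<omega>) else 0) \<in> borel_measurable (M N)" for r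
      by measurable
    show ?thesis unfolding u_def by measurable
  qed
  have ulim: "(\<lambda>n. u n \<omega>) \<longlonglongrightarrow> SS k t \<omega>" for \<omega>
  proof (cases "Fin \<omega>")
    case True
    then obtain n0 where n0: "\<forall>m. \<forall>r\<in>Rn k m. r \<in> rtuples nu N k t \<omega> \<longrightarrow> r \<in> Rn k n0" unfolding Fin_def by blast
    have sub: "rtuples nu N k t \<omega> \<subseteq> Rn k n0"
      using n0 drt_sub_Rn unfolding rtuples_eq by blast
    have "u n \<omega> = SS k t \<omega>" if "n \<ge> n0" for n
    proof -
      have sub': "rtuples nu N k t \<omega> \<subseteq> Rn k n" using sub Rn_mono[OF that] by blast
      have "u n \<omega> = (\<Sum>r\<in>Rn k n. if r \<in> rtuples nu N k t \<omega> then (\<Prod>i=1..k. cN nu N (r i) \<omega>) else 0)"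
        unfolding u_def using True by simp
      also have "\<dots> = (\<Sum>r\<in>Rn k n \<inter> rtuples nu N k t \<omega>. \<Prod>i=1..k. cN nu N (r i) \<omega>)"
        by (rule sum.inter_restrict[OF finite_Rn, symmetric])
      also have "Rn k n \<inter> rtuples nu N k t \<omega> = rtuples nu N k t \<omega>" using sub' by blast
      finally show ?thesis unfolding SS_def .
    qed
    then show ?thesis by (intro tendsto_eventually) (auto simp: eventually_sequentially)
  next
    case False
    then have "u n \<omega> = SS k t \<omega>" for n unfolding u_def SS_def using Fin_iff[of \<omega>] by simp
    then show ?thesis by simp
  qed
  show ?thesis by (rule borel_measurable_LIMSEQ_real[OF ulim um])
qed

end




lemma Kd_nonneg: "0 \<le> L \<Longrightarrow> 0 \<le> Kd k L"
  unfolding Kd_def by simp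

context mstep begin

interpretation P: prob_space "M N" by (rule prob)

lemma single_bound:
  assumes E: "E \<in> sets (M N)" and tf: "AE \<omega> in M N. tauN nu N (t k) \<omega> \<noteq> \<infinity>"
    and t0: "t 0 = 0" and tm: "\<forall>j<k. t j \<le> t (Suc j)" and d0: "0 < \<delta>" and d1: "\<delta> \<le> 1"
  shows "\<bar>(\<integral>\<omega>. indicator E \<omega> * SS k t \<omega> \<partial>M N) - Vt k t\<bar>
     \<le> Kd k (t k) * \<delta> + Kd k (t k) * (beta * (t k + 1) / \<delta>^2) + \<bar>Vt k t\<bar> * \<bar>1 - measure (M N) E\<bar>"
proof -
  define K where "K = Kd k (t k)"
  define V where "V = Vt k t"
  define u where "u = t k"
  have u0: "0 \<le> u" unfolding u_def using Tmono[OF tm, of 0 k] t0 by simp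
  have K0: "0 \<le> K" unfolding K_def using u0 u_def Kd_nonneg by simp
  define H where "H = {\<omega> \<in> space (M N). \<exists>r\<ge>1. (\<Sum>s=1..r-1. cN nu N s \<omega>) < u \<and> \<delta> < cN nu N r \<omega>}"
  have Hs: "H \<in> sets (M N)" unfolding H_def by measurable
  have pw: "AE \<omega> in M N. \<bar>SS k t \<omega> - V\<bar> \<le> K * \<delta> + K * indicator H \<omega>"
    using tf
  proof (rule AE_mp[OF _ AE_I2], intro impI)
    fix \<omega> assume w: "\<omega> \<in> space (M N)" and fin: "tauN nu N (t k) \<omega> \<noteq> \<infinity>"
    define c where "c r = cN nu N r \<omega>" for r
    have c0: "\<And>r. 0 \<le> c r" unfolding c_def by (rule c_nonneg)
    have ex: "\<exists>s. t k \<le> (\<Sum>r=1..s. c r)"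
      using fin unfolding tauN_eq dtau_def c_def by (auto split: if_splits)
    have SSeq: "SS k t \<omega> = (\<Sum>r\<in>drt c k t. \<Prod>i=1..k. c (r i))"
      unfolding SS_def rtuples_eq c_def ..
    show "\<bar>SS k t \<omega> - V\<bar> \<le> K * \<delta> + K * indicator H \<omega>"
    proof (cases "\<omega> \<in> H")
      case True
      have "\<bar>SS k t \<omega> - V\<bar> \<le> K * 1"
        unfolding SSeq K_def V_def
      proof (rule det_main[OF c0 t0 tm ex])
        fix r :: nat assume "1 \<le> r" then show "c r \<le> 1" unfolding c_def using c_le1 w by blast
      qed auto
      moreover have "0 \<le> K * \<delta>" using K0 d0 by simp
      ultimately show ?thesis using True by simp
    next
      case False
      have "\<bar>SS k t \<omega> - V\<bar> \<le> K * \<delta>"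
        unfolding SSeq K_def V_def
      proof (rule det_main[OF c0 t0 tm ex])
        fix r :: nat assume r: "1 \<le> r" and le: "enat r \<le> dtau c (t k)"
        have "(\<Sum>s=1..r-1. c s) < t k" using le enat_le_dtau[OF c0 r] by simp
        then show "c r \<le> \<delta>" using False w r unfolding H_def u_def c_def by (auto simp: not_less)
      qed (use d0 d1 in auto)
      then show ?thesis using False by simp
    qed
  qed
  have SSm: "SS k t \<in> borel_measurable (M N)" by (rule SS_meas)
  have Sint: "integrable (M N) (\<lambda>\<omega>. indicator E \<omega> * SS k t \<omega>)"
  proof (rule P.integrable_const_bound[where B="\<bar>V\<bar> + 2 * K"])
    show "AE x in M N. norm (indicator E x * SS k t x) \<le> \<bar>V\<bar> + 2 * K"
      using pw
    proof eventually_elim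
      case (elim x)
      have "K * \<delta> \<le> K" using K0 d1 by (simp add: mult_left_le)
      moreover have "K * indicator H x \<le> K" using K0 by (simp add: indicator_def)
      ultimately have "\<bar>SS k t x\<bar> \<le> \<bar>V\<bar> + 2 * K" using elim by linarith
      then show ?case using K0 by (simp add: indicator_def)
    qed
    show "(\<lambda>\<omega>. indicator E \<omega> * SS k t \<omega>) \<in> borel_measurable (M N)" using E SSm by measurable
  qed
  have Eint: "integrable (M N) (\<lambda>\<omega>. V * indicator E \<omega>)"
    using E by (intro integrable_mult_right integrable_real_indicator) (auto simp: less_top[symmetric])
  have Dint: "integrable (M N) (\<lambda>\<omega>. indicator E \<omega> * SS k t \<omega> - V * indicator E \<omega>)"
    using Sint Eint by (rule Bochner_Integration.integrable_diff)
  have Hint: "integrable (M N) (\<lambda>\<omega>. K * \<delta> + K * indicator H \<omega>)"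
    using Hs by (intro Bochner_Integration.integrable_add integrable_mult_right integrable_real_indicator) (auto simp: less_top[symmetric])
  have split: "(\<integral>\<omega>. indicator E \<omega> * SS k t \<omega> \<partial>M N)
      = (\<integral>\<omega>. indicator E \<omega> * SS k t \<omega> - V * indicator E \<omega> \<partial>M N) + V * measure (M N) E"
  proof -
    have "(\<integral>\<omega>. indicator E \<omega> * SS k t \<omega> - V * indicator E \<omega> \<partial>M N)
        = (\<integral>\<omega>. indicator E \<omega> * SS k t \<omega> \<partial>M N) - (\<integral>\<omega>. V * indicator E \<omega> \<partial>M N)"
      by (rule Bochner_Integration.integral_diff[OF Sint Eint])
    moreover have "(\<integral>\<omega>. V * indicator E \<omega> \<partial>M N) = V * measure (M N) E"
    proof -
      have Esp: "E \<inter> space (M N) = E" using sets.sets_into_space[OF E] by auto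
      show ?thesis by (simp add: Esp)
    qed
    ultimately show ?thesis by linarith
  qed
  have bnd: "\<bar>\<integral>\<omega>. indicator E \<omega> * SS k t \<omega> - V * indicator E \<omega> \<partial>M N\<bar> \<le> K * \<delta> + K * measure (M N) H"
  proof -
    have "\<bar>\<integral>\<omega>. indicator E \<omega> * SS k t \<omega> - V * indicator E \<omega> \<partial>M N\<bar>
        \<le> (\<integral>\<omega>. \<bar>indicator E \<omega> * SS k t \<omega> - V * indicator E \<omega>\<bar> \<partial>M N)"
      by (rule integral_abs_bound)
    also have "\<dots> \<le> (\<integral>\<omega>. K * \<delta> + K * indicator H \<omega> \<partial>M N)"
    proof (rule integral_mono_AE)
      show "integrable (M N) (\<lambda>\<omega>. \<bar>indicator E \<omega> * SS k t \<omega> - V * indicator E \<omega>\<bar>)"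
        using Dint by (rule integrable_abs)
      show "integrable (M N) (\<lambda>\<omega>. K * \<delta> + K * indicator H \<omega>)" by (rule Hint)
      show "AE \<omega> in M N. \<bar>indicator E \<omega> * SS k t \<omega> - V * indicator E \<omega>\<bar> \<le> K * \<delta> + K * indicator H \<omega>"
        using pw
      proof eventually_elim
        case (elim x)
        have "K * \<delta> \<ge> 0" using K0 d0 by simp
        then show ?case using elim K0
          by (cases "x \<in> E"; cases "x \<in> H") (auto simp: indicator_def algebra_simps)
      qed
    qed
    also have "\<dots> = K * \<delta> + K * measure (M N) H"
    proof -
      have Hsp: "H \<inter> space (M N) = H" using sets.sets_into_space[OF Hs] by auto
      have "(\<integral>\<omega>. K * \<delta> + K * indicator H \<omega> \<partial>M N) = (\<integral>\<omega>. K * \<delta> \<partial>M N) + (\<integral>\<omega>. K * indicator H \<omega> \<partial>M N)"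
        using Hs by (intro Bochner_Integration.integral_add integrable_mult_right integrable_real_indicator) (auto simp: less_top[symmetric])
      also have "(\<integral>\<omega>. K * \<delta> \<partial>M N) = K * \<delta>" by (simp add: P.prob_space)
      also have "(\<integral>\<omega>. K * indicator H \<omega> \<partial>M N) = K * measure (M N) H" by (simp add: Hsp)
      finally show ?thesis .
    qed
    finally show ?thesis .
  qed
  have PH: "measure (M N) H \<le> beta * (t k + 1) / \<delta>^2"
    unfolding H_def u_def using PH_bound[OF u0[unfolded u_def] d0] .
  define A where "A = (\<integral>\<omega>. indicator E \<omega> * SS k t \<omega> - V * indicator E \<omega> \<partial>M N)"
  have eq: "(\<integral>\<omega>. indicator E \<omega> * SS k t \<omega> \<partial>M N) - V = A - V * (1 - measure (M N) E)"
    unfolding split A_def by (simp add: algebra_simps)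
  have "\<bar>(\<integral>\<omega>. indicator E \<omega> * SS k t \<omega> \<partial>M N) - V\<bar> = \<bar>A - V * (1 - measure (M N) E)\<bar>"
    by (simp only: eq)
  also have "\<dots> \<le> \<bar>A\<bar> + \<bar>V * (1 - measure (M N) E)\<bar>" by (rule abs_triangle_ineq4)
  also have "\<dots> = \<bar>A\<bar> + \<bar>V\<bar> * \<bar>1 - measure (M N) E\<bar>" by (simp add: abs_mult)
  also have "\<dots> \<le> K * \<delta> + K * (beta * (t k + 1) / \<delta>^2) + \<bar>V\<bar> * \<bar>1 - measure (M N) E\<bar>"
  proof -
    have "K * measure (M N) H \<le> K * (beta * (t k + 1) / \<delta>^2)" using PH K0 by (rule mult_left_mono)
    then show ?thesis using bnd unfolding A_def by linarith
  qed
  finally show ?thesis unfolding K_def V_def .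
qed

end




lemma inv_lim: "(\<lambda>N. 1 / (real N - 1)) \<longlonglongrightarrow> 0"
proof (rule LIMSEQ_offset[where k=2])
  have "(\<lambda>n. 1 / (real (n + 2) - 1)) = (\<lambda>n. inverse (real (Suc n)))"
    by (rule ext) (simp add: divide_inverse)
  then show "(\<lambda>n. 1 / (real (n + 2) - 1)) \<longlonglongrightarrow> 0" using LIMSEQ_inverse_real_of_nat by simp
qed

theorem lemma10:
  fixes M :: "nat \<Rightarrow> 'a measure"
    and nu :: "nat \<Rightarrow> nat \<Rightarrow> nat \<Rightarrow> 'a \<Rightarrow> nat"
    and b :: "nat \<Rightarrow> real"
    and E :: "nat \<Rightarrow> 'a set"
    and k :: nat
    and t :: "nat \<Rightarrow> real"
    and T :: real
  assumes prob: "\<And>N. N \<ge> 2 \<Longrightarrow> prob_space (M N)"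
    and meas: "\<And>N s i. N \<ge> 2 \<Longrightarrow> nu N s i \<in> measurable (M N) (count_space UNIV)"
    and total: "\<And>N s \<omega>. N \<ge> 2 \<Longrightarrow> s \<ge> 1 \<Longrightarrow> \<omega> \<in> space (M N) \<Longrightarrow> (\<Sum>i=1..N. nu N s i \<omega>) = N"
    and tau_fin: "\<forall>\<^sub>F N in sequentially. \<forall>u\<ge>0. AE \<omega> in M N. tauN nu N u \<omega> \<noteq> \<infinity>"
    and b_lim: "b \<longlonglongrightarrow> 0"
    and moment: "\<forall>\<^sub>F N in sequentially. \<forall>s\<ge>1. AE \<omega> in M N.
        (\<Sum>i=1..N. real_cond_exp (M N) (filt M nu N (s - 1)) (\<lambda>x. ffact_r (real (nu N s i x)) 3) \<omega>)
          / ffact_r (real N) 3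
        \<le> b N * ((\<Sum>i=1..N. real_cond_exp (M N) (filt M nu N (s - 1)) (\<lambda>x. ffact_r (real (nu N s i x)) 2) \<omega>)
          / ffact_r (real N) 2)"
    and E_sets: "\<And>N. N \<ge> 2 \<Longrightarrow> E N \<in> sets (M N)"
    and E_lim: "(\<lambda>N. measure (M N) (E N)) \<longlonglongrightarrow> 1"
    and t0: "t 0 = 0"
    and t_mono: "\<And>j. j < k \<Longrightarrow> t j \<le> t (Suc j)"
    and tT: "t k \<le> T"
  shows "(\<lambda>N. \<integral>\<omega>. indicator (E N) \<omega> *
            (\<Sum>r\<in>rtuples nu N k t \<omega>. \<Prod>i=1..k. cN nu N (r i) \<omega>) \<partial>M N)
         \<longlonglongrightarrow> (\<Sum>f\<in>ituples k. \<Prod>j=1..k.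
               (t j - t (j - 1)) ^ (ext_idx k f j - ext_idx k f (j - 1))
               / fact (ext_idx k f j - ext_idx k f (j - 1)))"
proof -
  define V where "V = Vt k t"
  define K where "K = Kd k (t k)"
  have tm: "\<forall>j<k. t j \<le> t (Suc j)" using t_mono by auto
  have tk0: "0 \<le> t k" using Tmono[OF tm, of 0 k] t0 by simp
  have K0: "0 \<le> K" unfolding K_def using tk0 by (rule Kd_nonneg)
  have RHS: "(\<Sum>f\<in>ituples k. \<Prod>j=1..k.
               (t j - t (j - 1)) ^ (ext_idx k f j - ext_idx k f (j - 1))
               / fact (ext_idx k f j - ext_idx k f (j - 1))) = V"
    unfolding V_def Vt_def ..
  show ?thesis unfolding RHS
  proof (rule LIMSEQ_I)
    fix \<epsilon> :: real assume \<epsilon>: "0 < \<epsilon>"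
    define \<delta> where "\<delta> = min 1 (\<epsilon> / (4 * (K + 1)))"
    have d0: "0 < \<delta>" unfolding \<delta>_def using \<epsilon> K0 by simp
    have d1: "\<delta> \<le> 1" unfolding \<delta>_def by simp
    have Kd: "K * \<delta> < \<epsilon> / 4"
    proof -
      have "K * \<delta> \<le> K * (\<epsilon> / (4 * (K + 1)))" unfolding \<delta>_def using K0 by (intro mult_left_mono) auto
      also have "\<dots> = (\<epsilon> / 4) * (K / (K + 1))" using K0 by (simp add: field_simps)
      also have "\<dots> < (\<epsilon> / 4) * 1" using K0 \<epsilon> by (intro mult_strict_left_mono) auto
      finally show ?thesis by simp
    qed
    have lim1: "(\<lambda>N. K * ((\<bar>b N\<bar> + 1 / (real N - 1)) * (t k + 1) / \<delta>^2)) \<longlonglongrightarrow> K * ((0 + 0) * (t k + 1) / \<delta>^2)"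
      by (intro tendsto_intros tendsto_rabs_zero b_lim inv_lim) (use d0 in auto)
    have ev4: "\<forall>\<^sub>F N in sequentially. K * ((\<bar>b N\<bar> + 1 / (real N - 1)) * (t k + 1) / \<delta>^2) < \<epsilon> / 4"
    proof -
      have "K * ((0 + 0) * (t k + 1) / \<delta>^2) < \<epsilon> / 4" using \<epsilon> by simp
      from order_tendstoD(2)[OF lim1 this] show ?thesis .
    qed
    have lim2: "(\<lambda>N. \<bar>V\<bar> * \<bar>1 - measure (M N) (E N)\<bar>) \<longlonglongrightarrow> \<bar>V\<bar> * \<bar>1 - 1\<bar>"
      by (intro tendsto_intros E_lim)
    have ev5: "\<forall>\<^sub>F N in sequentially. \<bar>V\<bar> * \<bar>1 - measure (M N) (E N)\<bar> < \<epsilon> / 4"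
    proof -
      have "\<bar>V\<bar> * \<bar>1 - 1\<bar> < \<epsilon> / 4" using \<epsilon> by simp
      from order_tendstoD(2)[OF lim2 this] show ?thesis .
    qed
    have ev1: "\<forall>\<^sub>F N in sequentially. N \<ge> 3" by (simp add: eventually_ge_at_top)
    define Good where "Good N \<longleftrightarrow> N \<ge> 3 \<and> (\<forall>u\<ge>0. AE \<omega> in M N. tauN nu N u \<omega> \<noteq> \<infinity>) \<and>
        (\<forall>s\<ge>1. AE \<omega> in M N.
        (\<Sum>i=1..N. real_cond_exp (M N) (filt M nu N (s - 1)) (\<lambda>x. ffact_r (real (nu N s i x)) 3) \<omega>)
          / ffact_r (real N) 3
        \<le> b N * ((\<Sum>i=1..N. real_cond_exp (M N) (filt M nu N (s - 1)) (\<lambda>x. ffact_r (real (nu N s i x)) 2) \<omega>)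
          / ffact_r (real N) 2)) \<and>
        K * ((\<bar>b N\<bar> + 1 / (real N - 1)) * (t k + 1) / \<delta>^2) < \<epsilon> / 4 \<and>
        \<bar>V\<bar> * \<bar>1 - measure (M N) (E N)\<bar> < \<epsilon> / 4" for N
    have "\<forall>\<^sub>F N in sequentially. Good N"
      unfolding Good_def using ev1 tau_fin moment ev4 ev5 by (intro eventually_conj)
    then obtain N0 where N0: "\<And>N. N \<ge> N0 \<Longrightarrow> Good N"
      unfolding eventually_sequentially by auto
    show "\<exists>no. \<forall>N\<ge>no. norm ((\<integral>\<omega>. indicator (E N) \<omega> *
            (\<Sum>r\<in>rtuples nu N k t \<omega>. \<Prod>i=1..k. cN nu N (r i) \<omega>) \<partial>M N) - V) < \<epsilon>"
    proof (intro exI allI impI)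
      fix N assume N: "N \<ge> N0"
      have G: "Good N" using N0[OF N] .
      have N3: "N \<ge> 3" using G unfolding Good_def by blast
      have N2: "N \<ge> 2" using N3 by simp
      have taf: "\<forall>u\<ge>0. AE \<omega> in M N. tauN nu N u \<omega> \<noteq> \<infinity>" using G unfolding Good_def by blast
      have mo: "\<forall>s\<ge>1. AE \<omega> in M N.
        (\<Sum>i=1..N. real_cond_exp (M N) (filt M nu N (s - 1)) (\<lambda>x. ffact_r (real (nu N s i x)) 3) \<omega>)
          / ffact_r (real N) 3
        \<le> b N * ((\<Sum>i=1..N. real_cond_exp (M N) (filt M nu N (s - 1)) (\<lambda>x. ffact_r (real (nu N s i x)) 2) \<omega>)
          / ffact_r (real N) 2)" using G unfolding Good_def by blast
      have g4: "K * ((\<bar>b N\<bar> + 1 / (real N - 1)) * (t k + 1) / \<delta>^2) < \<epsilon> / 4" using G unfolding Good_def by blast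
      have g5: "\<bar>V\<bar> * \<bar>1 - measure (M N) (E N)\<bar> < \<epsilon> / 4" using G unfolding Good_def by blast
      interpret I: mstep M nu N "b N"
        by (rule mstep.intro[OF prob[OF N2] meas[OF N2] total[OF N2] N3 mo])
      have tf: "AE \<omega> in M N. tauN nu N (t k) \<omega> \<noteq> \<infinity>" using taf tk0 by blast
      note sb = I.single_bound[OF E_sets[OF N2] tf t0 tm d0 d1]
      have "\<bar>(\<integral>\<omega>. indicator (E N) \<omega> * I.SS k t \<omega> \<partial>M N) - V\<bar>
          \<le> K * \<delta> + K * (I.beta * (t k + 1) / \<delta>^2) + \<bar>V\<bar> * \<bar>1 - measure (M N) (E N)\<bar>"
        using sb unfolding K_def V_def .
      also have "\<dots> < \<epsilon> / 4 + \<epsilon> / 4 + \<epsilon> / 4"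
        using Kd g4 g5 unfolding I.beta_def by linarith
      also have "\<dots> < \<epsilon>" using \<epsilon> by simp
      finally show "norm ((\<integral>\<omega>. indicator (E N) \<omega> *
            (\<Sum>r\<in>rtuples nu N k t \<omega>. \<Prod>i=1..k. cN nu N (r i) \<omega>) \<partial>M N) - V) < \<epsilon>"
        unfolding I.SS_def by simp
    qed
  qed
qed


end
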